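(* Let $f$ be a face. Then (1) $\|\mathbf 1_{\{f\text{ is vacant}\}}\|_f\le\lambda^{-1/4}$ for every $\lambda>0$; and (2) for each $c<\frac14$ and all sufficiently large $\lambda$, $\|\mathbf 1_{\{f\text{ is occupied}\}}\|_f\le1-c\lambda^{-1/2}$.
   Context: Tiles: $T_{(x,y)}=[x-1,x+1]\times[y-1,y+1]$; $\Omega=\{\sigma\in\{0,1\}^{\mathbb{Z}^2}: \sigma(u)=\sigma(v)=1,u\ne v\Rightarrow\mathrm{int}(T_u)\cap\mathrm{int}(T_v)=\emptyset\}$. A face is a unit square $[a,a+1]\times[b,b+1]$, $a,b\in\mathbb{Z}$ (itself a $1\times1$ rectangle); it is vacant in $\sigma$ if contained in no tile of $\sigma$, otherwise occupied. Rectangles: closed axis-parallel with integer corners; $R_{K\times L}=[0,K]\times[0,L]$. For a rectangle $\Lambda$: $w_{\Lambda,\lambda}(\sigma)=\lambda^{-\frac14\#\{\text{vacant faces}\subset\Lambda\}}$; $\Omega^{\mathrm{per}}_\Lambda$ = configurations periodic under $(\mathrm{Width}\Lambda,0),(0,\mathrm{Height}\Lambda)$; $\mu^{\mathrm{per}}_{\Lambda,\lambda}\propto w_{\Lambda,\lambda}$ on $\Omega^{\mathrm{per}}_\Lambda$. For $(\tau f)(\sigma)=f(\sigma\circ\tau)$; for $R=[x_0,x_0+K]\times[y_0,y_0+L]$, $T^R$ is the group generated by reflections through lines $x=x_0+mK$, $y=y_0+nL$; if $2K\mid\mathrm{Width}\Lambda$, $2L\mid\mathrm{Height}\Lambda$,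 $T^R_\Lambda$ is its quotient by translations in $\mathrm{Width}(\Lambda)\mathbb{Z}\times\mathrm{Height}(\Lambda)\mathbb{Z}$, $\|g\|_{R|\Lambda}=[\mu^{\mathrm{per}}_{\Lambda,\lambda}(\prod_{\tau\in T^R_\Lambda}\tau g)]^{1/\#T^R_\Lambda}$ for $g$ depending only on $\sigma|_{R\cap\mathbb{Z}^2}$, and $\|g\|_R=\limsup_{n\to\infty}\|g\|_{R|R_{n!\times n!}}$. *)

theory Defs
  imports "HOL-Analysis.Analysis" "HOL-Library.Liminf_Limsup" "HOL-Library.Extended_Real"
begin

text \<open>Configurations: sigma : Z^2 -> {0,1}, encoded with bool (True = 1).\<close>
type_synonym config = "int \<times> int \<Rightarrow> bool"

definition tile :: "int \<times> int \<Rightarrow> (real \<times> real) set" where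
  "tile u = {real_of_int (fst u) - 1 .. real_of_int (fst u) + 1}
          \<times> {real_of_int (snd u) - 1 .. real_of_int (snd u) + 1}"

definition Omega :: "config set" where
  "Omega = {\<sigma>. \<forall>u v. \<sigma> u \<and> \<sigma> v \<and> u \<noteq> v \<longrightarrow> interior (tile u) \<inter> interior (tile v) = {}}"

definition face :: "int \<times> int \<Rightarrow> (real \<times> real) set" where
  "face p = {real_of_int (fst p) .. real_of_int (fst p) + 1}
          \<times> {real_of_int (snd p) .. real_of_int (snd p) + 1}"

definition vacant :: "config \<Rightarrow> int \<times> int \<Rightarrow> bool" where
  "vacant \<sigma> p \<longleftrightarrow> \<not> (\<exists>u. \<sigma> u \<and> face p \<subseteq> tile u)"

definition rectR :: "int \<Rightarrow> int \<Rightarrow> (real \<times> real) set" where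
  "rectR W H = {0 .. real_of_int W} \<times> {0 .. real_of_int H}"

definition num_vacant :: "int \<Rightarrow> int \<Rightarrow> config \<Rightarrow> nat" where
  "num_vacant W H \<sigma> = card {p. face p \<subseteq> rectR W H \<and> vacant \<sigma> p}"

definition weight :: "real \<Rightarrow> int \<Rightarrow> int \<Rightarrow> config \<Rightarrow> real" where
  "weight lam W H \<sigma> = lam powr (- (1/4) * real (num_vacant W H \<sigma>))"

definition Omega_per :: "int \<Rightarrow> int \<Rightarrow> config set" where
  "Omega_per W H = {\<sigma> \<in> Omega. \<forall>x y. \<sigma> (x + W, y) = \<sigma> (x, y) \<and> \<sigma> (x, y + H) = \<sigma> (x, y)}"

definition mu_per :: "real \<Rightarrow> int \<Rightarrow> int \<Rightarrow> (config \<Rightarrow> real) \<Rightarrow> real" where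
  "mu_per lam W H F =
     (\<Sum>\<sigma>\<in>Omega_per W H. weight lam W H \<sigma> * F \<sigma>) / (\<Sum>\<sigma>\<in>Omega_per W H. weight lam W H \<sigma>)"

definition reflx :: "int \<Rightarrow> int \<times> int \<Rightarrow> int \<times> int" where
  "reflx c v = (2 * c - fst v, snd v)"

definition refly :: "int \<Rightarrow> int \<times> int \<Rightarrow> int \<times> int" where
  "refly c v = (fst v, 2 * c - snd v)"

inductive_set refl_group :: "int \<Rightarrow> int \<Rightarrow> int \<Rightarrow> int \<Rightarrow> (int \<times> int \<Rightarrow> int \<times> int) set"
  for x0 y0 K L where
  rg_id: "id \<in> refl_group x0 y0 K L"
| rg_x: "\<tau> \<in> refl_group x0 y0 K L \<Longrightarrow> reflx (x0 + m * K) \<circ> \<tau> \<in> refl_group x0 y0 K L"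
| rg_y: "\<tau> \<in> refl_group x0 y0 K L \<Longrightarrow> refly (y0 + n * L) \<circ> \<tau> \<in> refl_group x0 y0 K L"

definition trans_rel :: "int \<Rightarrow> int \<Rightarrow> int \<Rightarrow> int \<Rightarrow> int \<Rightarrow> int
    \<Rightarrow> ((int \<times> int \<Rightarrow> int \<times> int) \<times> (int \<times> int \<Rightarrow> int \<times> int)) set" where
  "trans_rel x0 y0 K L W H =
     {(\<tau>1, \<tau>2). \<tau>1 \<in> refl_group x0 y0 K L \<and> \<tau>2 \<in> refl_group x0 y0 K L \<and>
        (\<exists>i j. \<forall>v. \<tau>1 v = (fst (\<tau>2 v) + i * W, snd (\<tau>2 v) + j * H))}"

definition TRL :: "int \<Rightarrow> int \<Rightarrow> int \<Rightarrow> int \<Rightarrow> int \<Rightarrow> int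
    \<Rightarrow> (int \<times> int \<Rightarrow> int \<times> int) set set" where
  "TRL x0 y0 K L W H = refl_group x0 y0 K L // trans_rel x0 y0 K L W H"

definition act :: "(int \<times> int \<Rightarrow> int \<times> int) set \<Rightarrow> (config \<Rightarrow> real) \<Rightarrow> config \<Rightarrow> real" where
  "act C g \<sigma> = g (\<sigma> \<circ> (SOME \<tau>. \<tau> \<in> C))"

definition norm_RL :: "(config \<Rightarrow> real) \<Rightarrow> int \<Rightarrow> int \<Rightarrow> int \<Rightarrow> int \<Rightarrow> real \<Rightarrow> int \<Rightarrow> int \<Rightarrow> real" where
  "norm_RL g x0 y0 K L lam W H =
     (mu_per lam W H (\<lambda>\<sigma>. \<Prod>C\<in>TRL x0 y0 K L W H. act C g \<sigma>))
       powr (1 / real (card (TRL x0 y0 K L W H)))"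

definition norm_R :: "(config \<Rightarrow> real) \<Rightarrow> int \<Rightarrow> int \<Rightarrow> int \<Rightarrow> int \<Rightarrow> real \<Rightarrow> ereal" where
  "norm_R g x0 y0 K L lam =
     limsup (\<lambda>n. ereal (norm_RL g x0 y0 K L lam (fact n) (fact n)))"

definition norm_face :: "(config \<Rightarrow> real) \<Rightarrow> int \<times> int \<Rightarrow> real \<Rightarrow> ereal" where
  "norm_face g p lam = norm_R g (fst p) (snd p) 1 1 lam"

definition vacant_ind :: "int \<times> int \<Rightarrow> config \<Rightarrow> real" where
  "vacant_ind p \<sigma> = (if vacant \<sigma> p then 1 else 0)"

definition occupied_ind :: "int \<times> int \<Rightarrow> config \<Rightarrow> real" where
  "occupied_ind p \<sigma> = (if vacant \<sigma> p then 0 else 1)"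

end

theory Submission
  imports Defs
begin




lemma face_sub_tile:
  "face p \<subseteq> tile u \<longleftrightarrow> (fst u = fst p \<or> fst u = fst p + 1) \<and> (snd u = snd p \<or> snd u = snd p + 1)"
proof
  assume h: "face p \<subseteq> tile u"
  have a: "(real_of_int (fst p), real_of_int (snd p)) \<in> tile u" using h unfolding face_def by auto
  have b: "(real_of_int (fst p)+1, real_of_int (snd p)+1) \<in> tile u" using h unfolding face_def by auto
  from a b have "fst u - 1 \<le> fst p" "fst p + 1 \<le> fst u + 1" "snd u - 1 \<le> snd p" "snd p + 1 \<le> snd u + 1"
    unfolding tile_def by auto
  thus "(fst u = fst p \<or> fst u = fst p + 1) \<and> (snd u = snd p \<or> snd u = snd p + 1)" by auto
next
  assume "(fst u = fst p \<or> fst u = fst p + 1) \<and> (snd u = snd p \<or> snd u = snd p + 1)"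
  thus "face p \<subseteq> tile u" unfolding face_def tile_def by auto
qed

lemma vacant_iff:
  "vacant \<sigma> (a,b) \<longleftrightarrow> \<not> (\<sigma> (a,b) \<or> \<sigma> (a+1,b) \<or> \<sigma> (a,b+1) \<or> \<sigma> (a+1,b+1))"
  unfolding vacant_def face_sub_tile by auto

lemma interior_tile: "interior (tile u) = {real_of_int (fst u) - 1 <..< real_of_int (fst u) + 1}
          \<times> {real_of_int (snd u) - 1 <..< real_of_int (snd u) + 1}"
  unfolding tile_def interior_Times by simp

lemma tiles_overlap:
  assumes "\<bar>fst u - fst v\<bar> \<le> 1" "\<bar>snd u - snd v\<bar> \<le> 1"
  shows "interior (tile u) \<inter> interior (tile v) \<noteq> {}"
proof -
  let ?x = "(real_of_int (fst u) + real_of_int (fst v))/2"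
  let ?y = "(real_of_int (snd u) + real_of_int (snd v))/2"
  have h1: "\<bar>real_of_int (fst u) - real_of_int (fst v)\<bar> \<le> 1" "\<bar>real_of_int (snd u) - real_of_int (snd v)\<bar> \<le> 1"
    using assms by (simp_all add: abs_le_iff)
  have "(?x, ?y) \<in> interior (tile u) \<inter> interior (tile v)"
    unfolding interior_tile using h1 by (auto simp: abs_le_iff)
  thus ?thesis by blast
qed

lemma Omega_adj:
  assumes "\<sigma> \<in> Omega" "\<sigma> u" "\<sigma> v" "u \<noteq> v" "\<bar>fst u - fst v\<bar> \<le> 1" "\<bar>snd u - snd v\<bar> \<le> 1"
  shows False
  using assms tiles_overlap unfolding Omega_def by blast

lemma tiles_disjoint:
  assumes "\<bar>fst u - fst v\<bar> \<ge> 2 \<or> \<bar>snd u - snd v\<bar> \<ge> 2"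
  shows "interior (tile u) \<inter> interior (tile v) = {}"
proof -
  have "\<bar>real_of_int (fst u) - real_of_int (fst v)\<bar> \<ge> 2 \<or> \<bar>real_of_int (snd u) - real_of_int (snd v)\<bar> \<ge> 2"
    using assms by (metis of_int_abs of_int_diff of_int_le_iff of_int_numeral)
  thus ?thesis unfolding interior_tile by (auto simp: abs_le_iff)
qed

lemma Omega_I:
  assumes "\<And>u v. \<sigma> u \<Longrightarrow> \<sigma> v \<Longrightarrow> u \<noteq> v \<Longrightarrow> \<bar>fst u - fst v\<bar> \<ge> 2 \<or> \<bar>snd u - snd v\<bar> \<ge> 2"
  shows "\<sigma> \<in> Omega"
  using assms tiles_disjoint unfolding Omega_def by blast



lemma per_x:
  fixes \<sigma> :: config and W :: int
  assumes "\<And>x y. \<sigma> (x + W, y) = \<sigma> (x, y)"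
  shows "\<sigma> (x + i * W, y) = \<sigma> (x, y)"
proof (induction i arbitrary: x rule: int_induct[where k=0])
  case base then show ?case by simp
next
  case (step1 i) 
  have "\<sigma> (x + (i+1) * W, y) = \<sigma> ((x + i*W) + W, y)" by (simp add: algebra_simps)
  also have "\<dots> = \<sigma> (x + i*W, y)" by (rule assms)
  finally show ?case using step1 by simp
next
  case (step2 i)
  have "\<sigma> (x + (i - 1) * W, y) = \<sigma> ((x + (i - 1) * W) + W, y)" by (rule assms[symmetric])
  also have "\<dots> = \<sigma> (x + i*W, y)" by (simp add: algebra_simps)
  finally show ?case using step2 by simp
qed

lemma per_y:
  fixes \<sigma> :: config and H :: int
  assumes "\<And>x y. \<sigma> (x, y + H) = \<sigma> (x, y)"
  shows "\<sigma> (x, y + j * H) = \<sigma> (x, y)"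
proof (induction j arbitrary: y rule: int_induct[where k=0])
  case base then show ?case by simp
next
  case (step1 i) 
  have "\<sigma> (x, y + (i+1) * H) = \<sigma> (x, (y + i*H) + H)" by (simp add: algebra_simps)
  also have "\<dots> = \<sigma> (x, y + i*H)" by (rule assms)
  finally show ?case using step1 by simp
next
  case (step2 i)
  have "\<sigma> (x, y + (i - 1) * H) = \<sigma> (x, (y + (i - 1) * H) + H)" by (rule assms[symmetric])
  also have "\<dots> = \<sigma> (x, y + i*H)" by (simp add: algebra_simps)
  finally show ?case using step2 by simp
qed

lemma per_xy:
  assumes "\<sigma> \<in> Omega_per W H"
  shows "\<sigma> (x + i * W, y + j * H) = \<sigma> (x, y)"
proof -
  have px: "\<And>x y. \<sigma> (x + W, y) = \<sigma> (x, y)" and py: "\<And>x y. \<sigma> (x, y + H) = \<sigma> (x, y)"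
    using assms unfolding Omega_per_def by auto
  show ?thesis using per_x[of \<sigma> W, OF px] per_y[of \<sigma> H, OF py] by simp
qed

lemma per_mod:
  assumes "\<sigma> \<in> Omega_per W H"
  shows "\<sigma> (x, y) = \<sigma> (x mod W, y mod H)"
proof -
  have "\<sigma> (x mod W + (x div W) * W, y mod H + (y div H) * H) = \<sigma> (x mod W, y mod H)"
    by (rule per_xy[OF assms])
  thus ?thesis by (simp add: mod_div_mult_eq)
qed

lemma vacant_per:
  assumes "\<sigma> \<in> Omega_per W H"
  shows "vacant \<sigma> (x + i * W, y + j * H) = vacant \<sigma> (x, y)"
proof -
  have e: "\<And>x y. \<sigma> (x + i * W, y + j * H) = \<sigma> (x, y)" using per_xy[OF assms] .
  have "\<sigma> (x + i * W + 1, y + j * H) = \<sigma> (x + 1, y)" using e[of "x+1" y] by (simp add: algebra_simps)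
  moreover have "\<sigma> (x + i * W, y + j * H + 1) = \<sigma> (x, y + 1)" using e[of x "y+1"] by (simp add: algebra_simps)
  moreover have "\<sigma> (x + i * W + 1, y + j * H + 1) = \<sigma> (x + 1, y + 1)" using e[of "x+1" "y+1"] by (simp add: algebra_simps)
  ultimately show ?thesis unfolding vacant_iff using e[of x y] by simp
qed

lemma finite_Omega_per:
  assumes "W > 0" "H > 0"
  shows "finite (Omega_per W H)"
proof -
  let ?B = "{0..<W} \<times> {0..<H}"
  let ?f = "\<lambda>\<sigma>. {p \<in> ?B. \<sigma> p}"
  have "inj_on ?f (Omega_per W H)"
  proof (rule inj_onI)
    fix \<sigma> \<tau> assume s: "\<sigma> \<in> Omega_per W H" and t: "\<tau> \<in> Omega_per W H" and e: "?f \<sigma> = ?f \<tau>"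
    show "\<sigma> = \<tau>"
    proof
      fix p :: "int \<times> int"
      obtain x y where p: "p = (x,y)" by fastforce
      have inB: "(x mod W, y mod H) \<in> ?B" using assms by auto
      have "\<sigma> (x mod W, y mod H) = \<tau> (x mod W, y mod H)"
        using e inB by blast
      thus "\<sigma> p = \<tau> p" using per_mod[OF s] per_mod[OF t] p by simp
    qed
  qed
  moreover have "?f ` Omega_per W H \<subseteq> Pow ?B" by auto
  ultimately show ?thesis
    by (meson finite_Pow_iff finite_SigmaI finite_atLeastLessThan_int finite_subset inj_on_finite)
qed

definition rep :: "int \<Rightarrow> int \<Rightarrow> bool \<times> int \<times> bool \<times> int \<Rightarrow> int \<times> int \<Rightarrow> int \<times> int" where
  "rep a b p = (\<lambda>v. (a + (if fst p then fst v - a else a - fst v) + 2 * fst (snd p),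
                    b + (if fst (snd (snd p)) then snd v - b else b - snd v) + 2 * snd (snd (snd p))))"

lemma rep_at: "rep a b (s1,k1,s2,k2) (x,y) = (a + (if s1 then x - a else a - x) + 2*k1, b + (if s2 then y - b else b - y) + 2*k2)"
  by (simp add: rep_def)

lemma refl_group_rep:
  assumes "\<tau> \<in> refl_group a b 1 1"
  shows "\<exists>p. \<tau> = rep a b p"
  using assms
proof induction
  case rg_id
  show ?case by (rule exI[of _ "(True,0,True,0)"]) (auto simp: rep_def)
next
  case (rg_x \<tau> m)
  then obtain s1 k1 s2 k2 where t: "\<tau> = rep a b (s1,k1,s2,k2)" by (metis prod_cases4)
  show ?case
    by (rule exI[of _ "(\<not>s1, m - k1, s2, k2)"]) (auto simp: t rep_def reflx_def fun_eq_iff)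
next
  case (rg_y \<tau> n)
  then obtain s1 k1 s2 k2 where t: "\<tau> = rep a b (s1,k1,s2,k2)" by (metis prod_cases4)
  show ?case
    by (rule exI[of _ "(s1, k1, \<not>s2, n - k2)"]) (auto simp: t rep_def refly_def fun_eq_iff)
qed

lemma rep_in: "rep a b p \<in> refl_group a b 1 1"
proof -
  obtain s1 k1 s2 k2 where p: "p = (s1,k1,s2,k2)" by (metis prod_cases4)
  define ty where "ty = (if s2 then refly (b + k2 * 1) \<circ> (refly (b + 0 * 1) \<circ> id) else refly (b + k2 * 1) \<circ> id)"
  have ty: "ty \<in> refl_group a b 1 1" unfolding ty_def
    by (cases s2) (simp only: if_True if_False; (rule refl_group.rg_y refl_group.rg_id)+)+
  define tx where "tx = (if s1 then reflx (a + k1 * 1) \<circ> (reflx (a + 0 * 1) \<circ> ty) else reflx (a + k1 * 1) \<circ> ty)"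
  have "tx \<in> refl_group a b 1 1" unfolding tx_def
    by (cases s1) (simp only: if_True if_False; (rule refl_group.rg_x ty)+)+
  moreover have "tx = rep a b p"
    unfolding tx_def ty_def p by (auto simp: rep_def reflx_def refly_def fun_eq_iff)
  ultimately show ?thesis by simp
qed



definition cls where "cls a b W H \<tau> = trans_rel a b 1 1 W H `` {\<tau>}"
definition Idx :: "int \<Rightarrow> int \<Rightarrow> (bool \<times> int \<times> bool \<times> int) set" where
  "Idx w h = UNIV \<times> {0..<w} \<times> UNIV \<times> {0..<h}"

lemma cls_eq:
  assumes "(\<tau>, \<rho>) \<in> trans_rel a b 1 1 W H"
  shows "cls a b W H \<tau> = cls a b W H \<rho>"
proof -
  obtain i0 j0 where e0: "\<And>v. \<tau> v = (fst (\<rho> v) + i0 * W, snd (\<rho> v) + j0 * H)"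
    and G: "\<tau> \<in> refl_group a b 1 1" "\<rho> \<in> refl_group a b 1 1"
    using assms unfolding trans_rel_def by auto
  show ?thesis
  proof (rule set_eqI)
    fix \<tau>'
    show "\<tau>' \<in> cls a b W H \<tau> \<longleftrightarrow> \<tau>' \<in> cls a b W H \<rho>"
    proof
      assume "\<tau>' \<in> cls a b W H \<tau>"
      then obtain i j where e: "\<And>v. \<tau> v = (fst (\<tau>' v) + i * W, snd (\<tau>' v) + j * H)"
        and G': "\<tau>' \<in> refl_group a b 1 1" unfolding cls_def trans_rel_def by auto
      have "\<And>v. \<rho> v = (fst (\<tau>' v) + (i - i0) * W, snd (\<tau>' v) + (j - j0) * H)"
      proof -
        fix v show "\<rho> v = (fst (\<tau>' v) + (i - i0) * W, snd (\<tau>' v) + (j - j0) * H)"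
          using e[of v] e0[of v] by (cases "\<rho> v", simp add: algebra_simps)
      qed
      thus "\<tau>' \<in> cls a b W H \<rho>" unfolding cls_def trans_rel_def using G G' by auto
    next
      assume "\<tau>' \<in> cls a b W H \<rho>"
      then obtain i j where e: "\<And>v. \<rho> v = (fst (\<tau>' v) + i * W, snd (\<tau>' v) + j * H)"
        and G': "\<tau>' \<in> refl_group a b 1 1" unfolding cls_def trans_rel_def by auto
      have "\<And>v. \<tau> v = (fst (\<tau>' v) + (i + i0) * W, snd (\<tau>' v) + (j + j0) * H)"
      proof -
        fix v show "\<tau> v = (fst (\<tau>' v) + (i + i0) * W, snd (\<tau>' v) + (j + j0) * H)"
          using e[of v] e0[of v] by (simp add: algebra_simps)
      qed
      thus "\<tau>' \<in> cls a b W H \<tau>" unfolding cls_def trans_rel_def using G G' by auto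
    qed
  qed
qed

lemma rep_reduce:
  assumes "w > 0" "h > 0"
  shows "(rep a b (s1,k1,s2,k2), rep a b (s1, k1 mod w, s2, k2 mod h)) \<in> trans_rel a b 1 1 (2*w) (2*h)"
proof -
  have "\<And>v. rep a b (s1,k1,s2,k2) v = (fst (rep a b (s1, k1 mod w, s2, k2 mod h) v) + (k1 div w) * (2*w),
              snd (rep a b (s1, k1 mod w, s2, k2 mod h) v) + (k2 div h) * (2*h))"
  proof -
    fix v :: "int \<times> int"
    obtain x y where v: "v = (x,y)" by fastforce
    have "2*k1 = 2*(k1 mod w) + (k1 div w) * (2*w)" "2*k2 = 2*(k2 mod h) + (k2 div h) * (2*h)"
    proof -
      have g: "\<And>k w q r::int. k = q * w + r \<Longrightarrow> 2*k = 2*r + q*(2*w)" by (simp add: algebra_simps)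
      show "2*k1 = 2*(k1 mod w) + (k1 div w) * (2*w)" by (rule g) simp
      show "2*k2 = 2*(k2 mod h) + (k2 div h) * (2*h)" by (rule g) simp
    qed
    thus "?thesis v" unfolding v rep_at by simp
  qed
  thus ?thesis unfolding trans_rel_def using rep_in by blast
qed

lemma TRL_eq:
  assumes "w > 0" "h > 0"
  shows "TRL a b 1 1 (2*w) (2*h) = (\<lambda>p. cls a b (2*w) (2*h) (rep a b p)) ` Idx w h"
proof
  show "TRL a b 1 1 (2*w) (2*h) \<subseteq> (\<lambda>p. cls a b (2*w) (2*h) (rep a b p)) ` Idx w h"
  proof
    fix C assume "C \<in> TRL a b 1 1 (2*w) (2*h)"
    then obtain \<tau> where t: "\<tau> \<in> refl_group a b 1 1" and C: "C = cls a b (2*w) (2*h) \<tau>"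
      unfolding TRL_def quotient_def cls_def by auto
    obtain p where "\<tau> = rep a b p" using refl_group_rep[OF t] by blast
    then obtain s1 k1 s2 k2 where tp: "\<tau> = rep a b (s1,k1,s2,k2)" by (metis prod_cases4)
    have "C = cls a b (2*w) (2*h) (rep a b (s1, k1 mod w, s2, k2 mod h))"
      unfolding C tp by (rule cls_eq[OF rep_reduce[OF assms]])
    moreover have "(s1, k1 mod w, s2, k2 mod h) \<in> Idx w h" unfolding Idx_def using assms by auto
    ultimately show "C \<in> (\<lambda>p. cls a b (2*w) (2*h) (rep a b p)) ` Idx w h" by blast
  qed
next
  show "(\<lambda>p. cls a b (2*w) (2*h) (rep a b p)) ` Idx w h \<subseteq> TRL a b 1 1 (2*w) (2*h)"
    unfolding TRL_def quotient_def cls_def using rep_in by blast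
qed

lemma self_cls: "rep a b p \<in> cls a b W H (rep a b p)"
proof -
  have "\<forall>v. rep a b p v = (fst (rep a b p v) + 0*W, snd (rep a b p v) + 0*H)" by simp
  thus ?thesis unfolding cls_def trans_rel_def using rep_in by blast
qed

lemma small_mult_zero:
  fixes k k' i w :: int
  assumes "0 \<le> k" "k < w" "0 \<le> k'" "k' < w" "k = k' + i * w"
  shows "i = 0"
proof (rule ccontr)
  assume "i \<noteq> 0"
  hence "i \<ge> 1 \<or> i \<le> -1" by linarith
  thus False
  proof
    assume "i \<ge> 1" hence "i * w \<ge> w" using assms by (simp add: mult_le_cancel_right1)
    thus False using assms by linarith
  next
    assume i: "i \<le> -1"
    have w: "w > 0" using assms by linarith
    have "(-i) * w \<ge> 1 * w" by (rule mult_right_mono) (use i w in auto)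
    hence "i * w \<le> - w" by simp
    thus False using assms by linarith
  qed
qed

lemma cls_inj:
  assumes "w > 0" "h > 0"
  shows "inj_on (\<lambda>p. cls a b (2*w) (2*h) (rep a b p)) (Idx w h)"
proof (rule inj_onI)
  fix p q assume p: "p \<in> Idx w h" and q: "q \<in> Idx w h"
    and e: "cls a b (2*w) (2*h) (rep a b p) = cls a b (2*w) (2*h) (rep a b q)"
  obtain s1 k1 s2 k2 where pp: "p = (s1,k1,s2,k2)" by (metis prod_cases4)
  obtain s1' k1' s2' k2' where qq: "q = (s1',k1',s2',k2')" by (metis prod_cases4)
  have "rep a b q \<in> cls a b (2*w) (2*h) (rep a b p)" using e self_cls by blast
  then obtain i j where ev: "\<And>v. rep a b p v = (fst (rep a b q v) + i * (2*w), snd (rep a b q v) + j * (2*h))"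
    unfolding cls_def trans_rel_def by auto
  have "2*k1 = 2*k1' + i*(2*w)" "2*k2 = 2*k2' + j*(2*h)"
    using ev[of "(a,b)"] by (simp_all add: pp qq rep_at)
  hence e1: "k1 = k1' + i * w" "k2 = k2' + j * h" by (simp_all add: algebra_simps)
  have b1: "0 \<le> k1" "k1 < w" "0 \<le> k1'" "k1' < w" "0 \<le> k2" "k2 < h" "0 \<le> k2'" "k2' < h"
    using p q unfolding pp qq Idx_def by auto
  have i0: "i = 0" by (rule small_mult_zero[OF b1(1-4) e1(1)])
  have j0: "j = 0" by (rule small_mult_zero[OF b1(5-8) e1(2)])
  have "rep a b p (a+1,b+1) = rep a b q (a+1,b+1)" using ev[of "(a+1,b+1)"] i0 j0 by simp
  hence "s1 = s1'" "s2 = s2'" using e1 i0 j0 unfolding pp qq rep_at by (auto split: if_splits)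
  thus "p = q" using pp qq e1 i0 j0 by simp
qed

lemma card_Idx:
  assumes "w > 0" "h > 0"
  shows "card (Idx w h) = nat (4 * w * h)"
proof -
  have "card (Idx w h) = 2 * nat w * (2 * nat h)"
    unfolding Idx_def by (simp add: card_cartesian_product)
  thus ?thesis using assms by (simp add: nat_mult_distrib)
qed

lemma card_TRL:
  assumes "w > 0" "h > 0"
  shows "card (TRL a b 1 1 (2*w) (2*h)) = nat (4 * w * h)"
  unfolding TRL_eq[OF assms] card_image[OF cls_inj[OF assms]] card_Idx[OF assms] ..

lemma act_rep:
  assumes "\<sigma> \<in> Omega_per (2*w) (2*h)"
  shows "act (cls a b (2*w) (2*h) (rep a b p)) g \<sigma> = g (\<sigma> \<circ> rep a b p)"
proof -
  define C where "C = cls a b (2*w) (2*h) (rep a b p)"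
  define t0 where "t0 = (SOME \<tau>. \<tau> \<in> C)"
  have r0: "rep a b p \<in> C" unfolding C_def by (rule self_cls)
  have "t0 \<in> C" unfolding t0_def by (rule someI[of "\<lambda>\<tau>. \<tau> \<in> C", OF r0])
  hence "(rep a b p, t0) \<in> trans_rel a b 1 1 (2*w) (2*h)" unfolding C_def cls_def by simp
  then obtain i j where ev: "\<forall>v. rep a b p v = (fst (t0 v) + i * (2*w), snd (t0 v) + j * (2*h))"
    unfolding trans_rel_def by blast
  have "\<sigma> \<circ> t0 = \<sigma> \<circ> rep a b p"
  proof
    fix v show "(\<sigma> \<circ> t0) v = (\<sigma> \<circ> rep a b p) v"
    proof -
      have e: "rep a b p v = (fst (t0 v) + i * (2*w), snd (t0 v) + j * (2*h))" using ev by blast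
      show ?thesis unfolding comp_def e per_xy[OF assms] by simp
    qed
  qed
  thus ?thesis unfolding act_def t0_def C_def by simp
qed

lemma prod_TRL:
  assumes "w > 0" "h > 0" "\<sigma> \<in> Omega_per (2*w) (2*h)"
  shows "(\<Prod>C\<in>TRL a b 1 1 (2*w) (2*h). act C g \<sigma>) = (\<Prod>p\<in>Idx w h. g (\<sigma> \<circ> rep a b p))"
  unfolding TRL_eq[OF assms(1,2)] prod.reindex[OF cls_inj[OF assms(1,2)]] using act_rep[OF assms(3)]
  by simp



lemma vacant_rep:
  "vacant (\<sigma> \<circ> rep a b (s1,k1,s2,k2)) (a,b) =
   vacant \<sigma> (if s1 then a + 2*k1 else a + 2*k1 - 1, if s2 then b + 2*k2 else b + 2*k2 - 1)"
  unfolding vacant_iff comp_def rep_at by (cases s1; cases s2) (auto simp: algebra_simps)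

lemma exists_rep:
  fixes w d :: int
  assumes "w > 0"
  shows "\<exists>s k i. 0 \<le> k \<and> k < w \<and> d = (if s then 2*k else 2*k - 1) + i*(2*w)"
proof (cases "even d")
  case True
  then obtain e where d: "d = 2*e" by blast
  have g: "\<And>k w q r::int. k = q * w + r \<Longrightarrow> 2*k = 2*r + q*(2*w)" by (simp add: algebra_simps)
  have "d = 2*(e mod w) + (e div w)*(2*w)" unfolding d by (rule g) simp
  thus ?thesis using assms by (intro exI[of _ True] exI[of _ "e mod w"] exI[of _ "e div w"]) simp
next
  case False
  then obtain e where d: "d + 1 = 2*e" by (metis odd_one even_add oddE add.commute dvd_def)
  have g: "\<And>k w q r::int. k = q * w + r \<Longrightarrow> 2*k = 2*r + q*(2*w)" by (simp add: algebra_simps)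
  have "2*e = 2*(e mod w) + (e div w)*(2*w)" by (rule g) simp
  hence "d = 2*(e mod w) - 1 + (e div w)*(2*w)" using d by linarith
  thus ?thesis using assms by (intro exI[of _ False] exI[of _ "e mod w"] exI[of _ "e div w"]) simp
qed

lemma all_faces:
  assumes "w > 0" "h > 0" "\<sigma> \<in> Omega_per (2*w) (2*h)"
    and V: "\<And>p. p \<in> Idx w h \<Longrightarrow> vacant (\<sigma> \<circ> rep a b p) (a,b) = V"
  shows "vacant \<sigma> q = V"
proof -
  obtain x y where q: "q = (x,y)" by fastforce
  obtain s1 k1 i where 1: "0 \<le> k1" "k1 < w" "x - a = (if s1 then 2*k1 else 2*k1 - 1) + i*(2*w)"
    using exists_rep[OF assms(1)] by blast
  obtain s2 k2 j where 2: "0 \<le> k2" "k2 < h" "y - b = (if s2 then 2*k2 else 2*k2 - 1) + j*(2*h)"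
    using exists_rep[OF assms(2)] by blast
  have "(s1,k1,s2,k2) \<in> Idx w h" using 1 2 unfolding Idx_def by auto
  hence "V = vacant \<sigma> (if s1 then a + 2*k1 else a + 2*k1 - 1, if s2 then b + 2*k2 else b + 2*k2 - 1)"
    using V vacant_rep by metis
  also have "\<dots> = vacant \<sigma> ((if s1 then a + 2*k1 else a + 2*k1 - 1) + i*(2*w), (if s2 then b + 2*k2 else b + 2*k2 - 1) + j*(2*h))"
    by (rule vacant_per[OF assms(3), symmetric])
  also have "((if s1 then a + 2*k1 else a + 2*k1 - 1) + i*(2*w), (if s2 then b + 2*k2 else b + 2*k2 - 1) + j*(2*h)) = q"
  proof -
    have gen: "\<And>X Y. x - a = (if s1 then 2*k1 else 2*k1-1) + X \<Longrightarrow> y - b = (if s2 then 2*k2 else 2*k2-1) + Y \<Longrightarrow>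
       ((if s1 then a + 2*k1 else a + 2*k1 - 1) + X, (if s2 then b + 2*k2 else b + 2*k2 - 1) + Y) = (x,y)"
      by (cases s1; cases s2) auto
    show ?thesis unfolding q by (rule gen[OF 1(3) 2(3)])
  qed
  hence "vacant \<sigma> ((if s1 then a + 2*k1 else a + 2*k1 - 1) + i*(2*w), (if s2 then b + 2*k2 else b + 2*k2 - 1) + j*(2*h)) = vacant \<sigma> q"
    by simp
  finally show ?thesis by simp
qed

lemma finite_Idx: "finite (Idx w h)" unfolding Idx_def by auto

lemma prod_vacant:
  assumes "w > 0" "h > 0" "\<sigma> \<in> Omega_per (2*w) (2*h)"
  shows "(\<Prod>C\<in>TRL a b 1 1 (2*w) (2*h). act C (vacant_ind (a,b)) \<sigma>) = (if \<forall>q. vacant \<sigma> q then 1 else 0)"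
proof -
  have "(\<Prod>C\<in>TRL a b 1 1 (2*w) (2*h). act C (vacant_ind (a,b)) \<sigma>) = (\<Prod>p\<in>Idx w h. vacant_ind (a,b) (\<sigma> \<circ> rep a b p))"
    by (rule prod_TRL[OF assms])
  also have "\<dots> = (if \<forall>q. vacant \<sigma> q then 1 else 0)"
  proof (cases "\<forall>p\<in>Idx w h. vacant (\<sigma> \<circ> rep a b p) (a,b)")
    case True
    hence "\<forall>q. vacant \<sigma> q" using all_faces[OF assms, of a b True] by blast
    thus ?thesis using True by (simp add: vacant_ind_def)
  next
    case False
    then obtain p where p: "p \<in> Idx w h" "\<not> vacant (\<sigma> \<circ> rep a b p) (a,b)" by blast
    obtain s1 k1 s2 k2 where pp: "p = (s1,k1,s2,k2)" by (metis prod_cases4)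
    have "\<not> (\<forall>q. vacant \<sigma> q)" using p(2) unfolding pp vacant_rep by blast
    moreover have "(\<Prod>p\<in>Idx w h. vacant_ind (a,b) (\<sigma> \<circ> rep a b p)) = 0"
      using p finite_Idx by (auto simp: vacant_ind_def intro!: prod_zero)
    ultimately show ?thesis by simp
  qed
  finally show ?thesis .
qed

lemma prod_occupied:
  assumes "w > 0" "h > 0" "\<sigma> \<in> Omega_per (2*w) (2*h)"
  shows "(\<Prod>C\<in>TRL a b 1 1 (2*w) (2*h). act C (occupied_ind (a,b)) \<sigma>) = (if \<forall>q. \<not> vacant \<sigma> q then 1 else 0)"
proof -
  have "(\<Prod>C\<in>TRL a b 1 1 (2*w) (2*h). act C (occupied_ind (a,b)) \<sigma>) = (\<Prod>p\<in>Idx w h. occupied_ind (a,b) (\<sigma> \<circ> rep a b p))"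
    by (rule prod_TRL[OF assms])
  also have "\<dots> = (if \<forall>q. \<not> vacant \<sigma> q then 1 else 0)"
  proof (cases "\<forall>p\<in>Idx w h. \<not> vacant (\<sigma> \<circ> rep a b p) (a,b)")
    case True
    hence "\<forall>q. \<not> vacant \<sigma> q" using all_faces[OF assms, of a b False] by blast
    thus ?thesis using True by (simp add: occupied_ind_def)
  next
    case False
    then obtain p where p: "p \<in> Idx w h" "vacant (\<sigma> \<circ> rep a b p) (a,b)" by blast
    obtain s1 k1 s2 k2 where pp: "p = (s1,k1,s2,k2)" by (metis prod_cases4)
    have "\<not> (\<forall>q. \<not> vacant \<sigma> q)" using p(2) unfolding pp vacant_rep by blast
    moreover have "(\<Prod>p\<in>Idx w h. occupied_ind (a,b) (\<sigma> \<circ> rep a b p)) = 0"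
      using p finite_Idx by (auto simp: occupied_ind_def intro!: prod_zero)
    ultimately show ?thesis by simp
  qed
  finally show ?thesis .
qed

lemma all_vacant_empty:
  assumes "\<forall>q. vacant \<sigma> q"
  shows "\<sigma> = (\<lambda>_. False)"
proof
  fix u show "\<sigma> u = False"
  proof (rule ccontr)
    assume "\<not> \<sigma> u = False"
    hence "\<sigma> u" by simp
    moreover have "face u \<subseteq> tile u" by (simp add: face_sub_tile)
    ultimately have "\<not> vacant \<sigma> u" unfolding vacant_def by blast
    thus False using assms by blast
  qed
qed



lemma perfect_step:
  assumes "\<sigma> \<in> Omega" "\<forall>q. \<not> vacant \<sigma> q"
  shows "\<sigma> (x+1, y+1) \<longleftrightarrow> (\<not> \<sigma> (x, y+1) \<and> \<not> \<sigma> (x, y) \<and> \<not> \<sigma> (x+1, y))"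
proof
  assume h: "\<sigma> (x+1, y+1)"
  have "\<not> \<sigma> (x, y+1)" using Omega_adj[OF assms(1) h, of "(x,y+1)"] by auto
  moreover have "\<not> \<sigma> (x, y)" using Omega_adj[OF assms(1) h, of "(x,y)"] by auto
  moreover have "\<not> \<sigma> (x+1, y)" using Omega_adj[OF assms(1) h, of "(x+1,y)"] by auto
  ultimately show "\<not> \<sigma> (x, y+1) \<and> \<not> \<sigma> (x, y) \<and> \<not> \<sigma> (x+1, y)" by blast
next
  assume "\<not> \<sigma> (x, y+1) \<and> \<not> \<sigma> (x, y) \<and> \<not> \<sigma> (x+1, y)"
  moreover have "\<not> vacant \<sigma> (x,y)" using assms(2) by blast
  ultimately show "\<sigma> (x+1, y+1)" unfolding vacant_iff by blast
qed

lemma perfect_unique: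
  assumes W: "W > 0" and H: "H > 0"
    and s1: "\<sigma>1 \<in> Omega_per W H" "\<forall>q. \<not> vacant \<sigma>1 q"
    and s2: "\<sigma>2 \<in> Omega_per W H" "\<forall>q. \<not> vacant \<sigma>2 q"
    and row: "\<And>x. 0 \<le> x \<Longrightarrow> x < W \<Longrightarrow> \<sigma>1 (x, 0) = \<sigma>2 (x, 0)"
    and col: "\<And>y. 0 \<le> y \<Longrightarrow> y < H \<Longrightarrow> \<sigma>1 (0, y) = \<sigma>2 (0, y)"
  shows "\<sigma>1 = \<sigma>2"
proof -
  have O1: "\<sigma>1 \<in> Omega" and O2: "\<sigma>2 \<in> Omega" using s1 s2 unfolding Omega_per_def by auto
  have row': "\<sigma>1 (x, 0) = \<sigma>2 (x, 0)" for x
    using per_mod[OF s1(1), of x 0] per_mod[OF s2(1), of x 0] row[of "x mod W"] W by simp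
  have col': "\<sigma>1 (0, y) = \<sigma>2 (0, y)" for y
    using per_mod[OF s1(1), of 0 y] per_mod[OF s2(1), of 0 y] col[of "y mod H"] H by simp
  have rows: "\<forall>x. \<sigma>1 (x, int n) = \<sigma>2 (x, int n)" for n
  proof (induction n)
    case 0 thus ?case using row' by simp
  next
    case (Suc n)
    note IHn = Suc.IH
    have natx: "\<sigma>1 (int m, int n + 1) = \<sigma>2 (int m, int n + 1)" for m
    proof (induction m)
      case 0 thus ?case using col' by simp
    next
      case (Suc m)
      note IHm = Suc.IH
      have "\<sigma>1 (int m + 1, int n + 1) = \<sigma>2 (int m + 1, int n + 1)"
        unfolding perfect_step[OF O1 s1(2), of "int m" "int n"] perfect_step[OF O2 s2(2), of "int m" "int n"]
        using IHm IHn by simp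
      moreover have "int (Suc m) = int m + 1" by simp
      ultimately show ?case by (simp only:)
    qed
    have "\<sigma>1 (x, int n + 1) = \<sigma>2 (x, int n + 1)" for x
    proof -
      have "\<sigma>1 (x, int n + 1) = \<sigma>1 (x mod W, (int n + 1) mod H)" by (rule per_mod[OF s1(1)])
      also have "\<dots> = \<sigma>1 (x mod W, int n + 1)" using per_mod[OF s1(1), of "x mod W" "int n + 1"] by simp
      also have "\<dots> = \<sigma>1 (int (nat (x mod W)), int n + 1)" using W by simp
      also have "\<dots> = \<sigma>2 (int (nat (x mod W)), int n + 1)" by (rule natx)
      also have "\<dots> = \<sigma>2 (x mod W, int n + 1)" using W by simp
      also have "\<dots> = \<sigma>2 (x mod W, (int n + 1) mod H)" using per_mod[OF s2(1), of "x mod W" "int n + 1"] by simp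
      also have "\<dots> = \<sigma>2 (x, int n + 1)" by (rule per_mod[OF s2(1), symmetric])
      finally show ?thesis .
    qed
    hence "\<forall>x. \<sigma>1 (x, int n + 1) = \<sigma>2 (x, int n + 1)" by blast
    moreover have "int (Suc n) = int n + 1" by simp
    ultimately show ?case by (simp only:) blast
  qed
  show ?thesis
  proof
    fix p :: "int \<times> int"
    obtain x y where p: "p = (x,y)" by fastforce
    have "\<sigma>1 (x, y) = \<sigma>1 (x, int (nat (y mod H)))"
      using per_mod[OF s1(1), of x y] per_mod[OF s1(1), of x "y mod H"] H by simp
    also have "\<dots> = \<sigma>2 (x, int (nat (y mod H)))" using rows by blast
    also have "\<dots> = \<sigma>2 (x, y)"
      using per_mod[OF s2(1), of x y] per_mod[OF s2(1), of x "y mod H"] H by simp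
    finally show "\<sigma>1 p = \<sigma>2 p" using p by simp
  qed
qed

lemma P_bound:
  assumes W: "W > 0" and H: "H > 0"
  shows "card {\<sigma> \<in> Omega_per W H. \<forall>q. \<not> vacant \<sigma> q} \<le> 2 ^ (nat W + nat H)"
proof -
  let ?P = "{\<sigma> \<in> Omega_per W H. \<forall>q. \<not> vacant \<sigma> q}"
  let ?f = "\<lambda>\<sigma>. ({x \<in> {0..<W}. \<sigma> (x, 0)}, {y \<in> {0..<H}. \<sigma> (0, y)})"
  have inj: "inj_on ?f ?P"
  proof (rule inj_onI)
    fix \<sigma>1 \<sigma>2 assume a1: "\<sigma>1 \<in> ?P" and a2: "\<sigma>2 \<in> ?P" and e: "?f \<sigma>1 = ?f \<sigma>2"
    show "\<sigma>1 = \<sigma>2"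
    proof (rule perfect_unique[OF W H])
      show "\<sigma>1 \<in> Omega_per W H" "\<forall>q. \<not> vacant \<sigma>1 q" "\<sigma>2 \<in> Omega_per W H" "\<forall>q. \<not> vacant \<sigma>2 q"
        using a1 a2 by (simp_all only: mem_Collect_eq) blast+
      have e1: "{x \<in> {0..<W}. \<sigma>1 (x, 0)} = {x \<in> {0..<W}. \<sigma>2 (x, 0)}" using e by simp
      have e2: "{y \<in> {0..<H}. \<sigma>1 (0, y)} = {y \<in> {0..<H}. \<sigma>2 (0, y)}" using e by simp
      show "\<sigma>1 (x, 0) = \<sigma>2 (x, 0)" if "0 \<le> x" "x < W" for x
      proof -
        have "x \<in> {x \<in> {0..<W}. \<sigma>1 (x, 0)} \<longleftrightarrow> x \<in> {x \<in> {0..<W}. \<sigma>2 (x, 0)}" by (simp only: e1)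
        thus ?thesis using that by simp
      qed
      show "\<sigma>1 (0, y) = \<sigma>2 (0, y)" if "0 \<le> y" "y < H" for y
      proof -
        have "y \<in> {y \<in> {0..<H}. \<sigma>1 (0, y)} \<longleftrightarrow> y \<in> {y \<in> {0..<H}. \<sigma>2 (0, y)}" by (simp only: e2)
        thus ?thesis using that by simp
      qed
    qed
  qed
  have sub: "?f ` ?P \<subseteq> Pow {0..<W} \<times> Pow {0..<H}" by auto
  have "card ?P = card (?f ` ?P)" using card_image[OF inj] by simp
  also have "\<dots> \<le> card (Pow {0..<W} \<times> Pow {0..<H})"
    by (rule card_mono[OF _ sub]) (intro finite_cartesian_product finite_Pow_iff[THEN iffD2] finite_atLeastLessThan_int)
  also have "\<dots> = 2 ^ (nat W + nat H)"
    by (simp add: card_cartesian_product card_Pow power_add)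
  finally show ?thesis .
qed



fun llen :: "bool list \<Rightarrow> nat" where
  "llen [] = 0"
| "llen (b # xs) = (if b then 2 else 1) + llen xs"

fun cens :: "bool list \<Rightarrow> int \<Rightarrow> int set" where
  "cens [] p = {}"
| "cens (b # xs) p = (if b then insert (p+1) (cens xs (p+2)) else cens xs (p+1))"

fun gaps :: "bool list \<Rightarrow> int \<Rightarrow> int set" where
  "gaps [] p = {}"
| "gaps (b # xs) p = (if b then gaps xs (p+2) else insert p (gaps xs (p+1)))"

fun ngaps :: "bool list \<Rightarrow> nat" where
  "ngaps [] = 0"
| "ngaps (b # xs) = (if b then 0 else 1) + ngaps xs"

lemma cens_range: "c \<in> cens xs p \<Longrightarrow> p + 1 \<le> c \<and> c \<le> p + int (llen xs) - 1"
proof (induction xs arbitrary: p)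
  case Nil thus ?case by simp
next
  case (Cons b xs)
  show ?case
  proof (cases b)
    case True
    hence "c = p + 1 \<or> c \<in> cens xs (p+2)" using Cons.prems by simp
    thus ?thesis using Cons.IH[of "p+2"] True by auto
  next
    case False
    hence "c \<in> cens xs (p+1)" using Cons.prems by simp
    thus ?thesis using Cons.IH[of "p+1"] False by auto
  qed
qed

lemma gaps_range: "c \<in> gaps xs p \<Longrightarrow> p \<le> c \<and> c < p + int (llen xs)"
proof (induction xs arbitrary: p)
  case Nil thus ?case by simp
next
  case (Cons b xs)
  show ?case
  proof (cases b)
    case True
    hence "c \<in> gaps xs (p+2)" using Cons.prems by simp
    thus ?thesis using Cons.IH[of "p+2"] True by auto
  next
    case False
    hence "c = p \<or> c \<in> gaps xs (p+1)" using Cons.prems by simp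
    thus ?thesis using Cons.IH[of "p+1"] False by auto
  qed
qed

lemma cens_sep: "c \<in> cens xs p \<Longrightarrow> c' \<in> cens xs p \<Longrightarrow> c < c' \<Longrightarrow> c + 2 \<le> c'"
proof (induction xs arbitrary: p)
  case Nil thus ?case by simp
next
  case (Cons b xs)
  show ?case
  proof (cases b)
    case True
    have "c = p + 1 \<or> c \<in> cens xs (p+2)" "c' = p + 1 \<or> c' \<in> cens xs (p+2)" using Cons.prems True by auto
    thus ?thesis using Cons.IH[of "p+2"] cens_range[of c xs "p+2"] cens_range[of c' xs "p+2"] Cons.prems(3)
      by auto
  next
    case False
    thus ?thesis using Cons by auto
  qed
qed

lemma cover: "p \<le> y \<Longrightarrow> y < p + int (llen xs) \<Longrightarrow> y \<in> gaps xs p \<or> y \<in> cens xs p \<or> y + 1 \<in> cens xs p"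
proof (induction xs arbitrary: p)
  case Nil thus ?case by simp
next
  case (Cons b xs)
  show ?case
  proof (cases b)
    case True
    show ?thesis
    proof (cases "y < p + 2")
      case True
      hence "y = p \<or> y = p + 1" using Cons.prems by auto
      thus ?thesis using \<open>b\<close> by auto
    next
      case False
      thus ?thesis using Cons.IH[of "p+2"] Cons.prems \<open>b\<close> by auto
    qed
  next
    case False
    show ?thesis
    proof (cases "y = p")
      case True thus ?thesis using \<open>\<not> b\<close> by auto
    next
      case False
      thus ?thesis using Cons.IH[of "p+1"] Cons.prems \<open>\<not> b\<close> by auto
    qed
  qed
qed

lemma finite_gaps: "finite (gaps xs p)"
  by (induction xs arbitrary: p) auto

lemma card_gaps: "card (gaps xs p) = ngaps xs"
proof (induction xs arbitrary: p)
  case Nil thus ?case by simp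
next
  case (Cons b xs)
  have "p \<notin> gaps xs (p+1)" using gaps_range[of p xs "p+1"] by auto
  thus ?case using Cons finite_gaps by auto
qed

lemma llen_Cons_pos: "llen (b # xs) \<ge> 1"
  by (cases b) simp_all

lemma cens_inj: "llen xs = llen ys \<Longrightarrow> cens xs p = cens ys p \<Longrightarrow> xs = ys"
proof (induction xs arbitrary: ys p)
  case Nil
  show ?case
  proof (cases ys)
    case (Cons c zs)
    hence "llen ys \<ge> 1" using llen_Cons_pos by simp
    thus ?thesis using Nil.prems by simp
  qed simp
next
  case (Cons b xs)
  show ?case
  proof (cases ys)
    case Nil thus ?thesis using Cons.prems llen_Cons_pos[of b xs] by simp
  next
    case (Cons b' ys')
    have nb: "p + 1 \<notin> cens zs (p+2)" for zs using cens_range[of "p+1" zs "p+2"] by auto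
    have nb': "p + 1 \<notin> cens zs (p+1)" for zs using cens_range[of "p+1" zs "p+1"] by auto
    have bb: "b = b'"
    proof -
      have "p + 1 \<in> cens (b # xs) p \<longleftrightarrow> b" using nb nb' by auto
      moreover have "p + 1 \<in> cens (b' # ys') p \<longleftrightarrow> b'" using nb nb' by auto
      ultimately show ?thesis using Cons.prems Cons by simp
    qed
    show ?thesis
    proof (cases b)
      case True
      have "insert (p+1) (cens xs (p+2)) = insert (p+1) (cens ys' (p+2))" using Cons.prems Cons True bb by simp
      hence "cens xs (p+2) = cens ys' (p+2)" using nb by (metis insert_ident)
      moreover have "llen xs = llen ys'" using Cons.prems Cons True bb by simp
      ultimately show ?thesis using Cons.IH Cons bb by simp
    next
      case False
      have "cens xs (p+1) = cens ys' (p+1)" using Cons.prems Cons False bb by simp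
      moreover have "llen xs = llen ys'" using Cons.prems Cons False bb by simp
      ultimately show ?thesis using Cons.IH Cons bb by simp
    qed
  qed
qed

definition XL :: "nat \<Rightarrow> bool list set" where "XL L = {xs. llen xs = L}"

lemma length_le_llen: "length xs \<le> llen xs"
  by (induction xs) auto

lemma finite_XL: "finite (XL L)"
proof -
  have "XL L \<subseteq> {xs. set xs \<subseteq> UNIV \<and> length xs \<le> L}" unfolding XL_def using length_le_llen by auto
  thus ?thesis using finite_lists_length_le[of "UNIV :: bool set" L] finite_subset by auto
qed

lemma XL_0: "XL 0 = {[]}"
  unfolding XL_def by (auto elim: llen.elims split: if_splits)

lemma XL_1: "XL 1 = {[False]}"
proof -
  have "llen xs = 1 \<longleftrightarrow> xs = [False]" for xs
    by (cases xs) (auto split: if_splits elim: llen.elims)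
  thus ?thesis unfolding XL_def by auto
qed

lemma XL_SS: "XL (L+2) = Cons True ` XL L \<union> Cons False ` XL (L+1)"
proof (rule set_eqI)
  fix xs
  show "xs \<in> XL (L+2) \<longleftrightarrow> xs \<in> Cons True ` XL L \<union> Cons False ` XL (L+1)"
    unfolding XL_def by (cases xs) (auto split: if_splits)
qed

definition aL :: "real \<Rightarrow> nat \<Rightarrow> real" where "aL t L = (\<Sum>xs\<in>XL L. t ^ ngaps xs)"

lemma aL_0: "aL t 0 = 1" unfolding aL_def XL_0 by simp
lemma aL_1: "aL t 1 = t" unfolding aL_def XL_1 by simp
lemma aL_SS: "aL t (L+2) = aL t L + t * aL t (L+1)"
proof -
  have d: "Cons True ` XL L \<inter> Cons False ` XL (L+1) = {}" by auto
  have "aL t (L+2) = (\<Sum>xs\<in>Cons True ` XL L. t ^ ngaps xs) + (\<Sum>xs\<in>Cons False ` XL (L+1). t ^ ngaps xs)"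
    unfolding aL_def XL_SS by (rule sum.union_disjoint) (auto simp: finite_XL)
  also have "(\<Sum>xs\<in>Cons True ` XL L. t ^ ngaps xs) = aL t L"
    unfolding aL_def by (subst sum.reindex) (auto simp: inj_on_def)
  also have "(\<Sum>xs\<in>Cons False ` XL (L+1). t ^ ngaps xs) = t * aL t (L+1)"
    unfolding aL_def by (subst sum.reindex) (auto simp: inj_on_def sum_distrib_left)
  finally show ?thesis .
qed

lemma aL_lower:
  assumes t: "t > 0" and r: "r > 0" "r^2 = t * r + 1" "t \<le> r"
  shows "aL t L \<ge> (t / r) * r ^ L"
proof (induction L rule: nat_less_induct)
  case (1 L)
  show ?case
  proof (cases L)
    case 0 thus ?thesis using t r by (simp add: aL_0 divide_le_eq_1)
  next
    case (Suc L1)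
    show ?thesis
    proof (cases L1)
      case 0 thus ?thesis using Suc t r aL_1[of t] by simp
    next
      case (Suc L2)
      have L: "L = L2 + 2" using \<open>L = Suc L1\<close> Suc by simp
      have lt: "L2 < L" "L2 + 1 < L" using L by simp_all
      have i1: "aL t L2 \<ge> (t / r) * r ^ L2" using 1 lt by blast
      have i2: "aL t (L2+1) \<ge> (t / r) * r ^ (L2+1)" using 1 lt by blast
      have "aL t L = aL t L2 + t * aL t (L2+1)" using L aL_SS by simp
      also have "\<dots> \<ge> (t / r) * r ^ L2 + t * ((t / r) * r ^ (L2+1))"
        using i1 i2 t by (intro add_mono mult_left_mono) auto
      also have "(t / r) * r ^ L2 + t * ((t / r) * r ^ (L2+1)) = (t / r) * r ^ L2 * (1 + t * r)"
        using r(1) by (simp add: field_simps)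
      also have "\<dots> = (t / r) * r ^ L2 * r^2" using r(2) by (simp add: algebra_simps)
      also have "\<dots> = (t / r) * r ^ L" unfolding L by (simp add: power_add mult.assoc power2_eq_square)
      finally show ?thesis by simp
    qed
  qed
qed



lemma face_in_rect: "face p \<subseteq> rectR W H \<longleftrightarrow> 0 \<le> fst p \<and> fst p < W \<and> 0 \<le> snd p \<and> snd p < H"
proof
  assume h: "face p \<subseteq> rectR W H"
  have a: "(real_of_int (fst p), real_of_int (snd p)) \<in> rectR W H" using h unfolding face_def by auto
  have b: "(real_of_int (fst p)+1, real_of_int (snd p)+1) \<in> rectR W H" using h unfolding face_def by auto
  from a b have "0 \<le> fst p" "fst p + 1 \<le> W" "0 \<le> snd p" "snd p + 1 \<le> H"
    unfolding rectR_def by auto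
  thus "0 \<le> fst p \<and> fst p < W \<and> 0 \<le> snd p \<and> snd p < H" by auto
next
  assume h: "0 \<le> fst p \<and> fst p < W \<and> 0 \<le> snd p \<and> snd p < H"
  hence "fst p + 1 \<le> W" "snd p + 1 \<le> H" by auto
  hence "real_of_int (fst p) + 1 \<le> real_of_int W" "real_of_int (snd p) + 1 \<le> real_of_int H"
    by (metis of_int_1 of_int_add of_int_le_iff)+
  thus "face p \<subseteq> rectR W H" using h unfolding face_def rectR_def by auto
qed

lemma faces_rect: "{p. face p \<subseteq> rectR W H} = {0..<W} \<times> {0..<H}"
  unfolding face_in_rect by auto

definition Phi :: "int \<Rightarrow> int \<Rightarrow> (int \<Rightarrow> bool list) \<Rightarrow> config" where
  "Phi W H F = (\<lambda>p. odd (fst p) \<and> snd p mod H \<in> cens (F ((fst p mod W) div 2)) 0)"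

definition Dom :: "int \<Rightarrow> int \<Rightarrow> (int \<Rightarrow> bool list) set" where
  "Dom w H = PiE {0..<w} (\<lambda>_. XL (nat H))"

lemma idx_range:
  fixes w x :: int
  assumes "w > 0"
  shows "(x mod (2*w)) div 2 \<in> {0..<w}"
proof -
  have "0 \<le> x mod (2*w)" "x mod (2*w) < 2*w" using assms by simp_all
  thus ?thesis by auto
qed

lemma no_consec:
  assumes H: "H > 0" and xs: "llen xs = nat H"
    and c1: "y mod H \<in> cens xs 0" and c2: "(y+1) mod H \<in> cens xs 0"
  shows False
proof -
  let ?c = "y mod H"
  have r1: "1 \<le> ?c" "?c \<le> H - 1" using cens_range[OF c1] xs H by auto
  have e: "(y+1) mod H = (?c + 1) mod H" by (simp add: mod_add_left_eq)
  show False
  proof (cases "?c = H - 1")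
    case True
    hence "(y+1) mod H = 0" using e by simp
    thus False using cens_range[OF c2] by simp
  next
    case False
    hence "(y+1) mod H = ?c + 1" using e r1 by simp
    thus False using cens_sep[OF c1 c2] by simp
  qed
qed

lemma Phi_in:
  assumes w: "w > 0" and H: "H > 0" and F: "F \<in> Dom w H"
  shows "Phi (2*w) H F \<in> Omega_per (2*w) H"
proof -
  let ?\<sigma> = "Phi (2*w) H F"
  have FX: "llen (F i) = nat H" if "i \<in> {0..<w}" for i using F that unfolding Dom_def XL_def by auto
  have "?\<sigma> \<in> Omega"
  proof (rule Omega_I)
    fix u v assume su: "?\<sigma> u" and sv: "?\<sigma> v" and uv: "u \<noteq> v"
    obtain x1 y1 where u: "u = (x1,y1)" by fastforce
    obtain x2 y2 where v: "v = (x2,y2)" by fastforce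
    show "\<bar>fst u - fst v\<bar> \<ge> 2 \<or> \<bar>snd u - snd v\<bar> \<ge> 2"
    proof (rule ccontr)
      assume "\<not> ?thesis"
      hence d: "\<bar>x1 - x2\<bar> < 2" "\<bar>y1 - y2\<bar> < 2" using u v by auto
      have o: "odd x1" "odd x2" using su sv u v unfolding Phi_def by auto
      have "even (x1 - x2)" using o by simp
      hence "x1 = x2" using d(1) by (smt (verit) dvd_add_triv_right_iff odd_one)
      hence "y1 \<noteq> y2" using uv u v by simp
      hence yy: "y2 = y1 + 1 \<or> y1 = y2 + 1" using d(2) by linarith
      let ?i = "(x1 mod (2*w)) div 2"
      have iF: "llen (F ?i) = nat H" using FX idx_range[OF w] by blast
      have m1: "y1 mod H \<in> cens (F ?i) 0" using su u unfolding Phi_def by simp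
      have m2: "y2 mod H \<in> cens (F ?i) 0" using sv v \<open>x1 = x2\<close> unfolding Phi_def by simp
      show False using yy no_consec[OF H iF] m1 m2 by blast
    qed
  qed
  moreover have "\<forall>x y. ?\<sigma> (x + 2*w, y) = ?\<sigma> (x, y) \<and> ?\<sigma> (x, y + H) = ?\<sigma> (x, y)"
    unfolding Phi_def by simp
  ultimately show ?thesis unfolding Omega_per_def by simp
qed

lemma Phi_inj:
  assumes w: "w > 0" and H: "H > 0"
  shows "inj_on (Phi (2*w) H) (Dom w H)"
proof (rule inj_onI)
  fix F G assume F: "F \<in> Dom w H" and G: "G \<in> Dom w H" and e: "Phi (2*w) H F = Phi (2*w) H G"
  show "F = G"
  proof
    fix i
    show "F i = G i"
    proof (cases "i \<in> {0..<w}")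
      case False
      have F': "F \<in> PiE {0..<w} (\<lambda>_. XL (nat H))" using F unfolding Dom_def .
      have G': "G \<in> PiE {0..<w} (\<lambda>_. XL (nat H))" using G unfolding Dom_def .
      show ?thesis using PiE_arb[OF F' False] PiE_arb[OF G' False] by simp
    next
      case True
      have lF: "llen (F i) = nat H" and lG: "llen (G i) = nat H"
        using F G True unfolding Dom_def XL_def by auto
      have "(2*i+1) mod (2*w) = 2*i+1" using True by (intro mod_pos_pos_trivial) auto
      hence xi: "((2*i+1) mod (2*w)) div 2 = i" by simp
      have "cens (F i) 0 = cens (G i) 0"
      proof (rule set_eqI)
        fix c
        show "c \<in> cens (F i) 0 \<longleftrightarrow> c \<in> cens (G i) 0"
        proof (cases "0 \<le> c \<and> c < H")
          case True
          hence cm: "c mod H = c" by simp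
          have "Phi (2*w) H F (2*i+1, c) = Phi (2*w) H G (2*i+1, c)" using e by simp
          thus ?thesis unfolding Phi_def using xi cm by simp
        next
          case False
          have HH: "int (nat H) = H" using H by simp
          have "c \<notin> cens (F i) 0" using cens_range[of c "F i" 0] False lF HH by auto
          moreover have "c \<notin> cens (G i) 0" using cens_range[of c "G i" 0] False lG HH by auto
          ultimately show ?thesis by simp
        qed
      qed
      thus ?thesis using cens_inj[of "F i" "G i" 0] lF lG by simp
    qed
  qed
qed

lemma sum_div2:
  fixes g :: "int \<Rightarrow> nat"
  assumes "w \<ge> 0"
  shows "(\<Sum>a\<in>{0..<2*w}. g (a div 2)) = 2 * (\<Sum>i\<in>{0..<w}. g i)"
proof -
  have U: "{0..<2*w} = (\<lambda>i. 2*i) ` {0..<w} \<union> (\<lambda>i. 2*i+1) ` {0..<w}"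
  proof (rule set_eqI)
    fix x
    show "x \<in> {0..<2*w} \<longleftrightarrow> x \<in> (\<lambda>i. 2*i) ` {0..<w} \<union> (\<lambda>i. 2*i+1) ` {0..<w}"
    proof
      assume x: "x \<in> {0..<2*w}"
      have xd: "x = 2*(x div 2) + x mod 2" by simp
      have dw: "x div 2 \<in> {0..<w}" using x by auto
      have "x mod 2 = 0 \<or> x mod 2 = 1" by auto
      thus "x \<in> (\<lambda>i. 2*i) ` {0..<w} \<union> (\<lambda>i. 2*i+1) ` {0..<w}"
      proof
        assume "x mod 2 = 0"
        hence "x = 2*(x div 2)" using xd by simp
        hence "x \<in> (\<lambda>i. 2*i) ` {0..<w}" using dw by (rule image_eqI)
        thus ?thesis by (rule UnI1)
      next
        assume "x mod 2 = 1"
        hence "x = 2*(x div 2) + 1" using xd by simp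
        hence "x \<in> (\<lambda>i. 2*i+1) ` {0..<w}" using dw by (rule image_eqI)
        thus ?thesis by (rule UnI2)
      qed
    qed auto
  qed
  have nn: "\<And>i j::int. 2*i \<noteq> 2*j+1" by presburger
  have D: "(\<lambda>i. 2*i) ` {0..<w} \<inter> (\<lambda>i. 2*i+1) ` {0..<w} = {}" using nn by blast
  have "(\<Sum>a\<in>{0..<2*w}. g (a div 2)) = (\<Sum>a\<in>(\<lambda>i. 2*i) ` {0..<w}. g (a div 2)) + (\<Sum>a\<in>(\<lambda>i. 2*i+1) ` {0..<w}. g (a div 2))"
    unfolding U by (rule sum.union_disjoint) (use D in auto)
  also have "(\<Sum>a\<in>(\<lambda>i. 2*i) ` {0..<w}. g (a div 2)) = (\<Sum>i\<in>{0..<w}. g i)"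
    by (subst sum.reindex) (auto simp: inj_on_def)
  also have "(\<Sum>a\<in>(\<lambda>i. 2*i+1) ` {0..<w}. g (a div 2)) = (\<Sum>i\<in>{0..<w}. g i)"
    by (subst sum.reindex) (auto simp: inj_on_def)
  finally show ?thesis by simp
qed

lemma Phi_vac:
  assumes w: "w > 0" and H: "H > 0" and F: "F \<in> Dom w H"
  shows "num_vacant (2*w) H (Phi (2*w) H F) \<le> 2 * (\<Sum>i\<in>{0..<w}. ngaps (F i))"
proof -
  let ?\<sigma> = "Phi (2*w) H F"
  let ?S = "SIGMA a:{0..<2*w}. gaps (F (a div 2)) 0"
  have FX: "llen (F i) = nat H" if "i \<in> {0..<w}" for i using F that unfolding Dom_def XL_def by auto
  have sub: "{p. face p \<subseteq> rectR (2*w) H \<and> vacant ?\<sigma> p} \<subseteq> ?S"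
  proof
    fix p assume "p \<in> {p. face p \<subseteq> rectR (2*w) H \<and> vacant ?\<sigma> p}"
    hence p: "face p \<subseteq> rectR (2*w) H" "vacant ?\<sigma> p" by auto
    obtain a b where ab: "p = (a,b)" by fastforce
    have bd: "0 \<le> a" "a < 2*w" "0 \<le> b" "b < H" using p(1) ab unfolding face_in_rect by auto
    let ?i = "a div 2"
    have iw: "?i \<in> {0..<w}" using bd by auto
    have "b \<in> gaps (F ?i) 0"
    proof (rule ccontr)
      assume ng: "b \<notin> gaps (F ?i) 0"
      have "b \<in> cens (F ?i) 0 \<or> b + 1 \<in> cens (F ?i) 0"
        using cover[of 0 b "F ?i"] ng bd FX[OF iw] by auto
      then obtain c where c: "c \<in> cens (F ?i) 0" "c = b \<or> c = b + 1" by blast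
      have cr: "1 \<le> c" "c \<le> H - 1" using cens_range[OF c(1)] FX[OF iw] H by auto
      let ?x = "2 * ?i + 1"
      have x1: "?x = a \<or> ?x = a + 1" by auto
      have x2: "?x mod (2*w) = ?x" using iw by auto
      have "?\<sigma> (?x, c)" unfolding Phi_def using x2 cr c(1) by simp
      moreover have "face (a,b) \<subseteq> tile (?x, c)" unfolding face_sub_tile using x1 c(2) by auto
      ultimately have "\<not> vacant ?\<sigma> (a,b)" unfolding vacant_def by blast
      thus False using p(2) ab by simp
    qed
    thus "p \<in> ?S" using ab bd by auto
  qed
  have fin: "finite ?S" using finite_gaps by auto
  have "num_vacant (2*w) H ?\<sigma> \<le> card ?S"
    unfolding num_vacant_def by (rule card_mono[OF fin sub])
  also have "card ?S = (\<Sum>a\<in>{0..<2*w}. card (gaps (F (a div 2)) 0))"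
    by (rule card_SigmaI) (auto simp: finite_gaps)
  also have "\<dots> = (\<Sum>a\<in>{0..<2*w}. ngaps (F (a div 2)))" by (simp add: card_gaps)
  also have "\<dots> = 2 * (\<Sum>i\<in>{0..<w}. ngaps (F i))" by (rule sum_div2) (use w in simp)
  finally show ?thesis .
qed



lemma weight_pos: "lam > 0 \<Longrightarrow> weight lam W H \<sigma> > 0"
  unfolding weight_def by simp

lemma Z_pos:
  assumes "w > 0" "H > 0" "lam > 0" "\<tau> \<in> Omega_per (2*w) H"
  shows "(\<Sum>\<sigma>\<in>Omega_per (2*w) H. weight lam (2*w) H \<sigma>) \<ge> weight lam (2*w) H \<tau>"
  using assms finite_Omega_per[of "2*w" H] weight_pos[OF assms(3)]
  by (intro member_le_sum) (auto intro: less_imp_le)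

lemma F0_Dom:
  assumes "h > 0"
  shows "(\<lambda>i. if i \<in> {0..<w} then replicate (nat h) True else undefined) \<in> Dom w (2*h)"
proof -
  have "llen (replicate k True) = 2 * k" for k by (induction k) auto
  hence "llen (replicate (nat h) True) = nat (2*h)" using assms by simp
  thus ?thesis unfolding Dom_def XL_def by auto
qed

lemma ngaps_rep: "ngaps (replicate k True) = 0" by (induction k) auto

lemma Z_ge1:
  assumes w: "w > 0" and h: "h > 0" and lam: "lam > 0"
  shows "(\<Sum>\<sigma>\<in>Omega_per (2*w) (2*h). weight lam (2*w) (2*h) \<sigma>) \<ge> 1"
proof -
  define F0 where "F0 = (\<lambda>i. if i \<in> {0..<w} then replicate (nat h) True else undefined)"
  have F0: "F0 \<in> Dom w (2*h)" unfolding F0_def by (rule F0_Dom[OF h])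
  have H: "2*h > 0" using h by simp
  have "num_vacant (2*w) (2*h) (Phi (2*w) (2*h) F0) \<le> 2 * (\<Sum>i\<in>{0..<w}. ngaps (F0 i))"
    by (rule Phi_vac[OF w H F0])
  also have "(\<Sum>i\<in>{0..<w}. ngaps (F0 i)) = 0" unfolding F0_def by (simp add: ngaps_rep)
  finally have "weight lam (2*w) (2*h) (Phi (2*w) (2*h) F0) = 1" unfolding weight_def using lam by simp
  moreover have "(\<Sum>\<sigma>\<in>Omega_per (2*w) (2*h). weight lam (2*w) (2*h) \<sigma>) \<ge> weight lam (2*w) (2*h) (Phi (2*w) (2*h) F0)"
    by (rule Z_pos[OF w H lam Phi_in[OF w H F0]])
  ultimately show ?thesis by simp
qed

lemma powr_half_pow:
  assumes "lam > 0"
  shows "lam powr (- (1/4) * real (2 * k)) = (lam powr (-1/2)) ^ k"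
proof -
  have "(lam powr (-1/2)) ^ k = (lam powr (-1/2)) powr (real k)" using assms by (simp add: powr_realpow)
  also have "\<dots> = lam powr (-1/2 * real k)" by (simp add: powr_powr)
  finally show ?thesis by simp
qed

lemma Z_ge_aL:
  assumes w: "w > 0" and H: "H > 0" and lam: "lam \<ge> 1"
  shows "(\<Sum>\<sigma>\<in>Omega_per (2*w) H. weight lam (2*w) H \<sigma>) \<ge> aL (lam powr (-1/2)) (nat H) ^ nat w"
proof -
  let ?t = "lam powr (-1/2)"
  let ?Z = "(\<Sum>\<sigma>\<in>Omega_per (2*w) H. weight lam (2*w) H \<sigma>)"
  have sub: "Phi (2*w) H ` Dom w H \<subseteq> Omega_per (2*w) H" using Phi_in[OF w H] by blast
  have "?Z \<ge> (\<Sum>\<sigma>\<in>Phi (2*w) H ` Dom w H. weight lam (2*w) H \<sigma>)"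
    by (rule sum_mono2[OF finite_Omega_per sub]) (use w H lam weight_pos in \<open>auto intro: less_imp_le\<close>)
  moreover have "(\<Sum>\<sigma>\<in>Phi (2*w) H ` Dom w H. weight lam (2*w) H \<sigma>) = (\<Sum>F\<in>Dom w H. weight lam (2*w) H (Phi (2*w) H F))"
    using sum.reindex[OF Phi_inj[OF w H], of "weight lam (2*w) H"] by (simp add: comp_def)
  moreover have "(\<Sum>F\<in>Dom w H. weight lam (2*w) H (Phi (2*w) H F)) \<ge> (\<Sum>F\<in>Dom w H. \<Prod>i\<in>{0..<w}. ?t ^ ngaps (F i))"
  proof (rule sum_mono)
    fix F assume F: "F \<in> Dom w H"
    have "(\<Prod>i\<in>{0..<w}. ?t ^ ngaps (F i)) = ?t ^ (\<Sum>i\<in>{0..<w}. ngaps (F i))" by (simp add: power_sum)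
    also have "\<dots> = lam powr (- (1/4) * real (2 * (\<Sum>i\<in>{0..<w}. ngaps (F i))))"
      using lam by (intro powr_half_pow[symmetric]) simp
    also have "\<dots> \<le> lam powr (- (1/4) * real (num_vacant (2*w) H (Phi (2*w) H F)))"
    proof (rule powr_mono)
      have "real (num_vacant (2*w) H (Phi (2*w) H F)) \<le> real (2 * (\<Sum>i\<in>{0..<w}. ngaps (F i)))"
        using Phi_vac[OF w H F] by (simp only: of_nat_le_iff)
      thus "- (1/4) * real (2 * (\<Sum>i\<in>{0..<w}. ngaps (F i))) \<le> - (1/4) * real (num_vacant (2*w) H (Phi (2*w) H F))"
        by linarith
    qed (rule lam)
    finally show "(\<Prod>i\<in>{0..<w}. ?t ^ ngaps (F i)) \<le> weight lam (2*w) H (Phi (2*w) H F)"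
      unfolding weight_def .
  qed
  moreover have "(\<Sum>F\<in>Dom w H. \<Prod>i\<in>{0..<w}. ?t ^ ngaps (F i)) = (\<Prod>i\<in>{0..<w}. \<Sum>xs\<in>XL (nat H). ?t ^ ngaps xs)"
    unfolding Dom_def by (rule prod_sum_PiE[symmetric]) (auto simp: finite_XL)
  moreover have "(\<Prod>i\<in>{0..<w}. \<Sum>xs\<in>XL (nat H). ?t ^ ngaps xs) = aL ?t (nat H) ^ nat w"
    unfolding aL_def by simp
  ultimately show ?thesis by linarith
qed



lemma card_TRL_real:
  assumes "w > 0" "h > 0"
  shows "real (card (TRL a b 1 1 (2*w) (2*h))) = real_of_int (2*w) * real_of_int (2*h)"
proof -
  have "real (card (TRL a b 1 1 (2*w) (2*h))) = real (nat (4*w*h))" using card_TRL[OF assms] by simp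
  also have "\<dots> = real_of_int (4*w*h)" using assms by simp
  finally show ?thesis by simp
qed

lemma empty_per: "(\<lambda>_. False) \<in> Omega_per W H"
  unfolding Omega_per_def Omega_def by simp

lemma nv_empty:
  assumes "W > 0" "H > 0"
  shows "real (num_vacant W H (\<lambda>_. False)) = real_of_int W * real_of_int H"
proof -
  have "{p. face p \<subseteq> rectR W H \<and> vacant (\<lambda>_. False) p} = {0..<W} \<times> {0..<H}"
    using faces_rect[of W H] unfolding vacant_def by auto
  hence "num_vacant W H (\<lambda>_. False) = nat W * nat H" unfolding num_vacant_def by (simp add: card_cartesian_product)
  thus ?thesis using assms by simp
qed

lemma norm1:
  assumes w: "w > 0" and h: "h > 0" and lam: "lam > 0"
  shows "norm_RL (vacant_ind (a,b)) a b 1 1 lam (2*w) (2*h) \<le> lam powr (-1/4)"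
proof -
  let ?\<Omega> = "Omega_per (2*w) (2*h)"
  let ?wt = "weight lam (2*w) (2*h)"
  let ?Z = "\<Sum>\<sigma>\<in>?\<Omega>. ?wt \<sigma>"
  let ?N = "real_of_int (2*w) * real_of_int (2*h)"
  have W: "2*w > 0" and H: "2*h > 0" using w h by auto
  have fin: "finite ?\<Omega>" using finite_Omega_per[OF W H] .
  have num: "(\<Sum>\<sigma>\<in>?\<Omega>. ?wt \<sigma> * (\<Prod>C\<in>TRL a b 1 1 (2*w) (2*h). act C (vacant_ind (a,b)) \<sigma>))
      = (\<Sum>\<sigma>\<in>?\<Omega>. if \<sigma> = (\<lambda>_. False) then ?wt \<sigma> else 0)"
  proof (rule sum.cong[OF refl])
    fix \<sigma> assume s: "\<sigma> \<in> ?\<Omega>"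
    have "(\<forall>q. vacant \<sigma> q) \<longleftrightarrow> \<sigma> = (\<lambda>_. False)"
      using all_vacant_empty[of \<sigma>] unfolding vacant_def by auto
    thus "?wt \<sigma> * (\<Prod>C\<in>TRL a b 1 1 (2*w) (2*h). act C (vacant_ind (a,b)) \<sigma>) = (if \<sigma> = (\<lambda>_. False) then ?wt \<sigma> else 0)"
      unfolding prod_vacant[OF w h s] by simp
  qed
  also have "\<dots> = ?wt (\<lambda>_. False)" using fin empty_per by (simp add: sum.delta)
  also have "\<dots> = lam powr (- (1/4) * ?N)" unfolding weight_def nv_empty[OF W H] ..
  finally have num': "(\<Sum>\<sigma>\<in>?\<Omega>. ?wt \<sigma> * (\<Prod>C\<in>TRL a b 1 1 (2*w) (2*h). act C (vacant_ind (a,b)) \<sigma>)) = lam powr (- (1/4) * ?N)" .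
  have Z1: "?Z \<ge> 1" by (rule Z_ge1[OF w h lam])
  have mu: "mu_per lam (2*w) (2*h) (\<lambda>\<sigma>. \<Prod>C\<in>TRL a b 1 1 (2*w) (2*h). act C (vacant_ind (a,b)) \<sigma>)
      = lam powr (- (1/4) * ?N) / ?Z" unfolding mu_per_def num' ..
  have "lam powr (- (1/4) * ?N) / ?Z \<le> lam powr (- (1/4) * ?N)"
    using Z1 by (simp add: divide_le_eq mult_le_cancel_left1 less_le_trans[OF zero_less_one])
  moreover have "0 \<le> lam powr (- (1/4) * ?N) / ?Z" using Z1 by simp
  moreover have Npos: "?N > 0" using w h by simp
  ultimately have "(lam powr (- (1/4) * ?N) / ?Z) powr (1 / ?N) \<le> (lam powr (- (1/4) * ?N)) powr (1 / ?N)"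
    by (intro powr_mono2) auto
  also have "\<dots> = lam powr ((- (1/4) * ?N) * (1 / ?N))" by (simp only: powr_powr)
  also have "(- (1/4) * ?N) * (1 / ?N) = -1/4" using Npos w h by (simp add: field_simps del: of_int_mult)
  finally have "(lam powr (- (1/4) * ?N) / ?Z) powr (1 / ?N) \<le> lam powr (-1/4)" .
  thus ?thesis unfolding norm_RL_def mu card_TRL_real[OF w h] .
qed

lemma r_facts:
  fixes t :: real
  assumes t: "t > 0"
  defines "r \<equiv> (t + sqrt (t^2 + 4)) / 2"
  shows "r > 0" "r^2 = t * r + 1" "t \<le> r" "r \<ge> 1 + t/2"
proof -
  let ?s = "sqrt (t^2 + 4)"
  have s2: "?s^2 = t^2 + 4" by simp
  have "sqrt (t^2) \<le> ?s" by (rule real_sqrt_le_mono) simp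
  moreover have "sqrt (t^2) = t" using t by simp
  ultimately have st: "t \<le> ?s" by simp
  have "sqrt 4 \<le> ?s" by (rule real_sqrt_le_mono) simp
  moreover have "sqrt (4::real) = 2" by (simp add: real_sqrt_eq_iff)
  ultimately have s2': "2 \<le> ?s" by simp
  show "r > 0" unfolding r_def using t st by simp
  show "t \<le> r" unfolding r_def using st by simp
  show "r \<ge> 1 + t/2" unfolding r_def using s2' by simp
  have "r^2 = (t^2 + 2*t*?s + ?s^2)/4" unfolding r_def by (simp add: power2_eq_square field_simps)
  also have "\<dots> = (2*t^2 + 2*t*?s + 4)/4" using s2 by simp
  also have "\<dots> = t * r + 1" unfolding r_def by (simp add: power2_eq_square field_simps)
  finally show "r^2 = t * r + 1" .
qed

lemma norm2:
  assumes w: "w > 0" and h: "h > 0" and lam: "lam \<ge> 1"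
  shows "norm_RL (occupied_ind (a,b)) a b 1 1 lam (2*w) (2*h) \<le>
     (2 ^ (nat (2*w) + nat (2*h)) / aL (lam powr (-1/2)) (nat (2*h)) ^ nat w) powr (1 / (real_of_int (2*w) * real_of_int (2*h)))"
proof -
  let ?\<Omega> = "Omega_per (2*w) (2*h)"
  let ?wt = "weight lam (2*w) (2*h)"
  let ?Z = "\<Sum>\<sigma>\<in>?\<Omega>. ?wt \<sigma>"
  let ?N = "real_of_int (2*w) * real_of_int (2*h)"
  let ?P = "{\<sigma> \<in> ?\<Omega>. \<forall>q. \<not> vacant \<sigma> q}"
  let ?A = "aL (lam powr (-1/2)) (nat (2*h)) ^ nat w"
  have W: "2*w > 0" and H: "2*h > 0" using w h by auto
  have lp: "lam > 0" using lam by simp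
  have fin: "finite ?\<Omega>" using finite_Omega_per[OF W H] .
  have num: "(\<Sum>\<sigma>\<in>?\<Omega>. ?wt \<sigma> * (\<Prod>C\<in>TRL a b 1 1 (2*w) (2*h). act C (occupied_ind (a,b)) \<sigma>))
      = (\<Sum>\<sigma>\<in>?\<Omega>. if \<forall>q. \<not> vacant \<sigma> q then 1 else 0)"
  proof (rule sum.cong[OF refl])
    fix \<sigma> assume s: "\<sigma> \<in> ?\<Omega>"
    have "(\<forall>q. \<not> vacant \<sigma> q) \<Longrightarrow> ?wt \<sigma> = 1"
    proof -
      assume "\<forall>q. \<not> vacant \<sigma> q"
      hence "{p. face p \<subseteq> rectR (2*w) (2*h) \<and> vacant \<sigma> p} = {}" by blast
      hence "num_vacant (2*w) (2*h) \<sigma> = 0" unfolding num_vacant_def by (simp only: card.empty)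
      thus "?wt \<sigma> = 1" unfolding weight_def using lp by simp
    qed
    thus "?wt \<sigma> * (\<Prod>C\<in>TRL a b 1 1 (2*w) (2*h). act C (occupied_ind (a,b)) \<sigma>) = (if \<forall>q. \<not> vacant \<sigma> q then 1 else 0)"
      unfolding prod_occupied[OF w h s] by simp
  qed
  also have "\<dots> = real (card ?P)"
    unfolding sum.inter_filter[OF fin, symmetric] by simp
  also have "\<dots> \<le> 2 ^ (nat (2*w) + nat (2*h))"
  proof -
    have "card ?P \<le> 2 ^ (nat (2*w) + nat (2*h))" by (rule P_bound[OF W H])
    hence "real (card ?P) \<le> real (2 ^ (nat (2*w) + nat (2*h)))" by (simp only: of_nat_le_iff)
    thus ?thesis by simp
  qed
  finally have num': "(\<Sum>\<sigma>\<in>?\<Omega>. ?wt \<sigma> * (\<Prod>C\<in>TRL a b 1 1 (2*w) (2*h). act C (occupied_ind (a,b)) \<sigma>)) \<le> 2 ^ (nat (2*w) + nat (2*h))" .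
  have num0: "(\<Sum>\<sigma>\<in>?\<Omega>. ?wt \<sigma> * (\<Prod>C\<in>TRL a b 1 1 (2*w) (2*h). act C (occupied_ind (a,b)) \<sigma>)) \<ge> 0"
    unfolding num by (simp add: sum_nonneg)
  have ZA: "?Z \<ge> ?A" by (rule Z_ge_aL[OF w H lam])
  have Apos: "?A > 0"
  proof -
    define t where "t = lam powr (-1/2)"
    define r where "r = (t + sqrt (t^2 + 4)) / 2"
    have t: "t > 0" unfolding t_def using lp by simp
    note rf = r_facts[OF t, folded r_def]
    have "aL t (nat (2*h)) \<ge> (t / r) * r ^ (nat (2*h))" by (rule aL_lower[OF t rf(1,2,3)])
    moreover have "(t / r) * r ^ (nat (2*h)) > 0" using t rf(1) by simp
    ultimately show ?thesis unfolding t_def by simp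
  qed
  have mu: "mu_per lam (2*w) (2*h) (\<lambda>\<sigma>. \<Prod>C\<in>TRL a b 1 1 (2*w) (2*h). act C (occupied_ind (a,b)) \<sigma>)
      \<le> 2 ^ (nat (2*w) + nat (2*h)) / ?A"
    unfolding mu_per_def by (rule frac_le[OF _ num' Apos ZA]) simp
  have mu0: "mu_per lam (2*w) (2*h) (\<lambda>\<sigma>. \<Prod>C\<in>TRL a b 1 1 (2*w) (2*h). act C (occupied_ind (a,b)) \<sigma>) \<ge> 0"
    unfolding mu_per_def using num0 ZA Apos by simp
  show ?thesis unfolding norm_RL_def card_TRL_real[OF w h]
    by (rule powr_mono2) (use mu mu0 w h in simp_all)
qed



lemma fact_even:
  assumes "n \<ge> 2"
  shows "(fact n :: int) = 2 * ((fact n :: int) div 2)" "(fact n :: int) div 2 > 0"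
proof -
  have "(2::nat) dvd fact n" using dvd_fact[of 2 n] assms by simp
  hence d: "(2::int) dvd fact n" by (metis of_nat_fact of_nat_dvd_iff of_nat_numeral) 
  thus "(fact n :: int) = 2 * ((fact n :: int) div 2)" by simp
  have "(fact n :: int) \<ge> 2" using fact_ge_self[of n] assms
    by (metis of_nat_fact of_nat_le_iff of_nat_numeral order_trans)
  thus "(fact n :: int) div 2 > 0" by simp
qed

lemma Bform:
  fixes m :: nat and t r :: real
  assumes m: "m > 0" "even m" and t: "t > 0" and r: "r > 0"
  shows "(2^(2*m) / ((t/r) * r^m)^(m div 2)) powr (1/(real m * real m))
       = exp ((2*ln 2 - ln (t/r)/2) / real m - ln r / 2)"
proof -
  let ?X = "(t/r) * r^m"
  have X: "?X > 0" using t r by simp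
  have base: "2^(2*m) / ?X^(m div 2) > (0::real)" using X by simp
  have "ln ?X = ln (t/r) + ln (r^m)" by (rule ln_mult_pos) (use t r in simp_all)
  hence lnX: "ln ?X = ln (t/r) + real m * ln r" using r by (simp add: ln_realpow)
  have md: "real (m div 2) = real m / 2" using m by (simp add: real_of_nat_div)
  have "ln (2^(2*m) / ?X^(m div 2)) = real (2*m) * ln 2 - real (m div 2) * ln ?X"
  proof -
    have "ln (2^(2*m) / ?X^(m div 2)) = ln (2^(2*m)) - ln (?X^(m div 2))"
      by (rule ln_divide_pos) (use X in simp_all)
    also have "ln ((2::real)^(2*m)) = real (2*m) * ln 2" by (rule ln_realpow)
    also have "ln (?X^(m div 2)) = real (m div 2) * ln ?X" by (rule ln_realpow)
    finally show ?thesis .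
  qed
  also have "\<dots> = 2 * real m * ln 2 - (real m / 2) * (ln (t/r) + real m * ln r)"
    unfolding lnX md by simp
  finally have L: "ln (2^(2*m) / ?X^(m div 2)) = 2 * real m * ln 2 - (real m / 2) * (ln (t/r) + real m * ln r)" .
  have "(2^(2*m) / ?X^(m div 2)) powr (1/(real m * real m)) = exp (1/(real m * real m) * ln (2^(2*m) / ?X^(m div 2)))"
  proof -
    have bne: "2^(2*m) / ?X^(m div 2) \<noteq> (0::real)" using base by linarith
    show ?thesis by (simp only: powr_def bne if_False)
  qed
  also have "1/(real m * real m) * ln (2^(2*m) / ?X^(m div 2)) = (2*ln 2 - ln (t/r)/2) / real m - ln r / 2"
    unfolding L using m by (simp add: field_simps)
  finally show ?thesis .
qed

lemma fact_tendsto: "((\<lambda>n. K / real (fact n)) \<longlongrightarrow> 0) sequentially"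
proof -
  have "filterlim (\<lambda>n. real (fact n)) at_top sequentially"
  proof (rule filterlim_at_top_mono[OF filterlim_real_sequentially])
    have "real n \<le> real (fact n)" for n using fact_ge_self[of n] by (simp only: of_nat_le_iff)
    thus "\<forall>\<^sub>F n in sequentially. real n \<le> real (fact n)" by simp
  qed
  hence "filterlim (\<lambda>n. real (fact n)) at_infinity sequentially" by (rule filterlim_at_top_imp_at_infinity)
  thus ?thesis by (rule tendsto_divide_0[OF tendsto_const])
qed

lemma final_ineq:
  fixes c t r :: real
  assumes c: "c < 1/4" and t: "t > 0" and r: "r \<ge> 1 + t/2" and tc: "c > 0 \<Longrightarrow> t \<le> (1/2 - 2*c)/c"
  shows "exp (- ln r / 2) \<le> 1 - c * t"
proof -
  let ?y = "1 - c * t"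
  have r0: "r > 0" using r t by linarith
  have main: "?y > 0 \<and> r * ?y^2 \<ge> 1"
  proof (cases "c > 0")
    case False
    hence y1: "?y \<ge> 1" using t by (simp add: mult_nonpos_nonneg)
    have r1: "r \<ge> 1" using r t by linarith
    have "?y^2 \<ge> 1" using y1 by (simp add: one_le_power)
    hence "r * ?y^2 \<ge> 1 * 1" using r1 by (intro mult_mono) auto
    thus ?thesis using y1 by simp
  next
    case True
    have ct: "c * t \<le> 1/2 - 2*c" using tc[OF True] True by (simp add: field_simps)
    have y0: "?y > 0" using ct True by linarith
    have "?y^2 = 1 - 2*c*t + (c*t)^2" by (simp add: power2_eq_square algebra_simps)
    moreover have "(c*t)^2 \<ge> 0" by simp
    ultimately have "?y^2 \<ge> 1 - 2*c*t" by linarith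
    moreover have "1 - 2*c*t \<ge> 0" using ct True by linarith
    ultimately have "r * ?y^2 \<ge> (1 + t/2) * (1 - 2*c*t)" using r t by (intro mult_mono) auto
    moreover have "(1 + t/2) * (1 - 2*c*t) = 1 + t * (1/2 - 2*c - c*t)" by (simp add: algebra_simps)
    moreover have "t * (1/2 - 2*c - c*t) \<ge> 0" using ct t by simp
    ultimately show ?thesis using y0 by linarith
  qed
  have "ln (r * ?y^2) \<ge> 0" using main by simp
  moreover have "ln (r * ?y^2) = ln r + 2 * ln ?y" using main r0 by (simp add: ln_mult ln_realpow)
  ultimately have "- ln r / 2 \<le> ln ?y" by linarith
  thus ?thesis using main ln_ge_iff by blast
qed



lemma t_le_delta:
  fixes lam d :: real
  assumes d: "d > 0" and lam: "lam \<ge> 1 / d^2"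
  shows "lam powr (-1/2) \<le> d"
proof -
  have p: "1 / d^2 > 0" using d by simp
  have "lam powr (-1/2) \<le> (1 / d^2) powr (-1/2)"
    by (rule powr_mono2'[OF _ p lam]) simp
  also have "(1 / d^2) powr (-1/2) = d"
  proof -
    have ne: "1 / d^2 \<noteq> 0" using p by linarith
    have l1: "ln (1 / d^2) = ln 1 - ln (d^2)" by (rule ln_divide_pos) (use d in simp_all)
    have l2: "ln (d^2) = real 2 * ln d" by (rule ln_realpow)
    have "(1 / d^2) powr (-1/2) = exp ((-1/2) * ln (1 / d^2))" by (simp only: powr_def ne if_False)
    also have "(-1/2) * ln (1 / d^2) = ln d" unfolding l1 l2 by simp
    also have "exp (ln d) = d" using d by simp
    finally show ?thesis .
  qed
  finally show ?thesis .
qed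

theorem corollary4p5:
  fixes f :: "int \<times> int"
  shows "(\<forall>lam::real. lam > 0 \<longrightarrow>
            norm_face (vacant_ind f) f lam \<le> ereal (lam powr (- 1 / 4)))
       \<and> (\<forall>c::real. c < 1 / 4 \<longrightarrow>
            (\<exists>lam0::real. \<forall>lam \<ge> lam0.
               norm_face (occupied_ind f) f lam \<le> ereal (1 - c * lam powr (- 1 / 2))))"
proof -
  obtain a b where f: "f = (a,b)" by fastforce
  define w where "w n = (fact n :: int) div 2" for n
  have fe: "(fact n :: int) = 2 * w n" if "n \<ge> 2" for n using fact_even[OF that] unfolding w_def by simp
  have wpos: "w n > 0" if "n \<ge> 2" for n using fact_even[OF that] unfolding w_def by simp
  have part1: "norm_face (vacant_ind f) f lam \<le> ereal (lam powr (- 1 / 4))" if lam: "lam > 0" for lam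
  proof -
    have ev: "eventually (\<lambda>n. ereal (norm_RL (vacant_ind (a,b)) a b 1 1 lam (fact n) (fact n)) \<le> ereal (lam powr (- 1 / 4))) sequentially"
      using eventually_ge_at_top[of 2]
    proof (rule eventually_mono)
      fix n :: nat assume n: "n \<ge> 2"
      have "norm_RL (vacant_ind (a,b)) a b 1 1 lam (2 * w n) (2 * w n) \<le> lam powr (-1/4)"
        by (rule norm1[OF wpos[OF n] wpos[OF n] lam])
      thus "ereal (norm_RL (vacant_ind (a,b)) a b 1 1 lam (fact n) (fact n)) \<le> ereal (lam powr (- 1 / 4))"
        unfolding fe[OF n] by simp
    qed
    show ?thesis unfolding norm_face_def norm_R_def f fst_conv snd_conv
      by (rule Limsup_bounded[OF ev])
  qed
  have part2: "\<exists>lam0::real. \<forall>lam \<ge> lam0. norm_face (occupied_ind f) f lam \<le> ereal (1 - c * lam powr (- 1 / 2))"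
    if c: "c < 1/4" for c
  proof -
    define d where "d = (1/2 - 2*c) / c"
    define lam0 where "lam0 = (if c > 0 then max 1 (1 / d^2) else 1)"
    show ?thesis
    proof (intro exI allI impI)
      fix lam :: real assume lam0: "lam0 \<le> lam"
      have lam1: "lam \<ge> 1" using lam0 unfolding lam0_def by (auto split: if_splits)
      have lp: "lam > 0" using lam1 by simp
      define t where "t = lam powr (-1/2)"
      define r where "r = (t + sqrt (t^2 + 4)) / 2"
      have t: "t > 0" unfolding t_def using lp by simp
      note rf = r_facts[OF t, folded r_def]
      have tc: "t \<le> (1/2 - 2*c)/c" if cp: "c > 0"
      proof -
        have "d > 0" unfolding d_def using cp c by simp
        moreover have "lam \<ge> 1 / d^2" using lam0 cp unfolding lam0_def by simp
        ultimately show ?thesis unfolding t_def d_def[symmetric] by (rule t_le_delta)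
      qed
      have fin: "exp (- ln r / 2) \<le> 1 - c * t" by (rule final_ineq[OF c t rf(4) tc])
      define K where "K = 2 * ln 2 - ln (t / r) / 2"
      define B where "B n = exp (K / real (fact n) - ln r / 2)" for n
      have ev: "eventually (\<lambda>n. ereal (norm_RL (occupied_ind (a,b)) a b 1 1 lam (fact n) (fact n)) \<le> ereal (B n)) sequentially"
        using eventually_ge_at_top[of 2]
      proof (rule eventually_mono)
        fix n :: nat assume n: "n \<ge> 2"
        define m where "m = (fact n :: nat)"
        have m2: "(2 * w n) = int m" unfolding m_def using fe[OF n] by simp
        have mpos: "m > 0" unfolding m_def by simp
        have meven: "even m" using m2 by (metis even_mult_iff even_numeral even_of_nat)
        have nm: "nat (2 * w n) = m" using m2 by simp
        have nw: "nat (w n) = m div 2" using m2 by linarith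
        have rm: "real_of_int (2 * w n) = real m" using m2 by simp
        have "norm_RL (occupied_ind (a,b)) a b 1 1 lam (2 * w n) (2 * w n) \<le>
            (2 ^ (nat (2 * w n) + nat (2 * w n)) / aL t (nat (2 * w n)) ^ nat (w n)) powr (1 / (real_of_int (2 * w n) * real_of_int (2 * w n)))"
          unfolding t_def by (rule norm2[OF wpos[OF n] wpos[OF n] lam1])
        also have "\<dots> = (2 ^ (2 * m) / aL t m ^ (m div 2)) powr (1 / (real m * real m))"
          unfolding nm nw rm by (simp add: mult_2)
        also have "\<dots> \<le> (2 ^ (2 * m) / ((t/r) * r^m) ^ (m div 2)) powr (1 / (real m * real m))"
        proof (rule powr_mono2)
          have X: "(t/r) * r^m > 0" using t rf(1) by simp
          have A: "aL t m \<ge> (t/r) * r^m" by (rule aL_lower[OF t rf(1,2,3)])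
          have XA: "((t/r) * r^m) ^ (m div 2) \<le> aL t m ^ (m div 2)" using X A by (intro power_mono) auto
          have Xk: "((t/r) * r^m) ^ (m div 2) > 0" using X by simp
          show "2 ^ (2 * m) / aL t m ^ (m div 2) \<le> 2 ^ (2 * m) / ((t/r) * r^m) ^ (m div 2)"
            by (rule divide_left_mono[OF XA]) (use Xk XA in auto)
          show "0 \<le> 2 ^ (2 * m) / aL t m ^ (m div 2)" using Xk XA by simp
        qed simp
        also have "\<dots> = B n"
          unfolding B_def K_def m_def[symmetric] by (rule Bform[OF mpos meven t rf(1)])
        finally show "ereal (norm_RL (occupied_ind (a,b)) a b 1 1 lam (fact n) (fact n)) \<le> ereal (B n)"
          unfolding fe[OF n] by simp
      qed
      have lim: "(B \<longlongrightarrow> exp (0 - ln r / 2)) sequentially"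
        unfolding B_def by (intro tendsto_exp tendsto_diff fact_tendsto tendsto_const)
      have "norm_face (occupied_ind f) f lam \<le> Limsup sequentially (\<lambda>n. ereal (B n))"
        unfolding norm_face_def norm_R_def f fst_conv snd_conv by (rule Limsup_mono[OF ev])
      also have "Limsup sequentially (\<lambda>n. ereal (B n)) = ereal (exp (0 - ln r / 2))"
        by (rule lim_imp_Limsup) (use lim in simp_all)
      also have "\<dots> \<le> ereal (1 - c * lam powr (- 1 / 2))" using fin unfolding t_def by simp
      finally show "norm_face (occupied_ind f) f lam \<le> ereal (1 - c * lam powr (- 1 / 2))" .
    qed
  qed
  show ?thesis using part1 part2 by blast
qed


end
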